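(* None of the following real Lie algebras arises as a contraction of a semisimple Lie algebra: $L_{8,3}$, $L_{8,4}^p$ with $p\neq0$, $L_{8,16}$, $L_{8,17}^p$ with $p\neq-1$, $L_{8,18}^p$ with $p\neq0$. Here, on a basis $X_1,\dots,X_8$ with $[X_i,X_j]=\sum_kC_{ij}^kX_k$ and listing only nonzero $C_{ij}^k$ with $i<j$: (A) denotes $C_{23}^1=1,C_{12}^3=1,C_{13}^2=-1,C_{14}^7=\tfrac12,C_{15}^6=\tfrac12,C_{16}^5=-\tfrac12,C_{17}^4=-\tfrac12,C_{24}^5=\tfrac12,C_{25}^4=-\tfrac12,C_{26}^7=\tfrac12,C_{27}^6=-\tfrac12,C_{34}^6=\tfrac12,C_{35}^7=-\tfrac12,C_{36}^4=-\tfrac12,C_{37}^5=\tfrac12$; (B) denotes $C_{12}^2=2,C_{13}^3=-2,C_{23}^1=1,C_{14}^4=1,C_{15}^5=-1,C_{25}^4=1,C_{34}^5=1,C_{16}^6=1,C_{17}^7=-1,C_{27}^6=1,C_{36}^7=1$; and $L_{8,3}$: (A) and $C_{48}^4=C_{58}^5=C_{68}^6=C_{78}^7=1$; $L_{8,4}^p$ ($p\in\mathbb{R}$): (A) and $C_{48}^4=C_{58}^5=C_{68}^6=C_{78}^7=p$, $C_{48}^6=-1,C_{58}^7=-1,C_{68}^4=1,C_{78}^5=1$; $L_{8,16}$: (B) and $C_{48}^4=1,C_{58}^5=1,C_{68}^4=1,C_{68}^6=1,C_{78}^5=1,C_{78}^7=1$; $L_{8,17}^p$ ($p\in\mathbb{R}$):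 (B) and $C_{48}^4=1,C_{58}^5=1,C_{68}^6=p,C_{78}^7=p$; $L_{8,18}^p$ ($p\in\mathbb{R}$): (B) and $C_{48}^4=p,C_{48}^6=-1,C_{58}^5=p,C_{58}^7=-1,C_{68}^4=1,C_{68}^6=p,C_{78}^5=1,C_{78}^7=p$.
   Context: All Lie algebras are over $\mathbb{R}$. Unlisted brackets $[X_i,X_j]$, $i<j$, are zero; the others follow by antisymmetry. Contraction: for a Lie algebra $(V,[\cdot,\cdot])$ and nonsingular linear maps $\Phi_t$, $t\in[1,\infty)$, if $[X,Y]_\infty=\lim_{t\to\infty}\Phi_t^{-1}[\Phi_tX,\Phi_tY]$ exists for all $X,Y$, any Lie algebra isomorphic to $(V,[\cdot,\cdot]_\infty)$ is a contraction of $(V,[\cdot,\cdot])$. *)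

theory Defs
  imports "HOL-Analysis.Analysis"
begin

definition lie_algebra :: "('a::real_vector \<Rightarrow> 'a \<Rightarrow> 'a) \<Rightarrow> bool" where
  "lie_algebra B \<longleftrightarrow> bilinear B \<and> (\<forall>x. B x x = 0) \<and>
     (\<forall>x y z. B x (B y z) + B y (B z x) + B z (B x y) = 0)"

definition lie_ideal :: "('a::real_vector \<Rightarrow> 'a \<Rightarrow> 'a) \<Rightarrow> 'a set \<Rightarrow> bool" where
  "lie_ideal B I \<longleftrightarrow> subspace I \<and> (\<forall>x y. y \<in> I \<longrightarrow> B x y \<in> I)"

fun derived_series :: "('a::real_vector \<Rightarrow> 'a \<Rightarrow> 'a) \<Rightarrow> 'a set \<Rightarrow> nat \<Rightarrow> 'a set" where
  "derived_series B I 0 = I"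
| "derived_series B I (Suc k) =
     span {B x y | x y. x \<in> derived_series B I k \<and> y \<in> derived_series B I k}"

definition solvable_ideal :: "('a::real_vector \<Rightarrow> 'a \<Rightarrow> 'a) \<Rightarrow> 'a set \<Rightarrow> bool" where
  "solvable_ideal B I \<longleftrightarrow> lie_ideal B I \<and> (\<exists>k. derived_series B I k = {0})"

definition semisimple :: "('a::real_vector \<Rightarrow> 'a \<Rightarrow> 'a) \<Rightarrow> bool" where
  "semisimple B \<longleftrightarrow> lie_algebra B \<and> (\<exists>x::'a. x \<noteq> 0) \<and>
     (\<forall>I. solvable_ideal B I \<longrightarrow> I = {0})"

definition contraction_limit ::
  "('a::euclidean_space \<Rightarrow> 'a \<Rightarrow> 'a) \<Rightarrow> ('a \<Rightarrow> 'a \<Rightarrow> 'a) \<Rightarrow> bool" where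
  "contraction_limit B0 B1 \<longleftrightarrow>
     (\<exists>\<Phi> :: real \<Rightarrow> 'a \<Rightarrow> 'a.
        (\<forall>t\<ge>1. linear (\<Phi> t) \<and> bij (\<Phi> t)) \<and>
        (\<forall>X Y. ((\<lambda>t. inv (\<Phi> t) (B0 (\<Phi> t X) (\<Phi> t Y))) \<longlongrightarrow> B1 X Y) at_top))"

definition is_contraction_of ::
  "('b::real_vector \<Rightarrow> 'b \<Rightarrow> 'b) \<Rightarrow> ('a::euclidean_space \<Rightarrow> 'a \<Rightarrow> 'a) \<Rightarrow> bool" where
  "is_contraction_of L B0 \<longleftrightarrow>
     (\<exists>B1 (f :: 'a \<Rightarrow> 'b). contraction_limit B0 B1 \<and> linear f \<and> bij f \<and>
        (\<forall>X Y. f (B1 X Y) = L (f X) (f Y)))"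

definition idx8 :: "nat \<Rightarrow> 8" where "idx8 i = of_nat (i - 1)"

text \<open>Structure constants given as list of ((i,j,k), C_ij^k) with i<j.\<close>
definition sc :: "((nat \<times> nat \<times> nat) \<times> real) list \<Rightarrow> nat \<Rightarrow> nat \<Rightarrow> nat \<Rightarrow> real" where
  "sc l i j k = sum_list (map snd (filter (\<lambda>e. fst e = (i, j, k)) l))"

definition sc_full :: "((nat \<times> nat \<times> nat) \<times> real) list \<Rightarrow> nat \<Rightarrow> nat \<Rightarrow> nat \<Rightarrow> real" where
  "sc_full l i j k = (if i < j then sc l i j k else if j < i then - sc l j i k else 0)"

definition sc_bracket :: "((nat \<times> nat \<times> nat) \<times> real) list \<Rightarrow> real^8 \<Rightarrow> real^8 \<Rightarrow> real^8" where
  "sc_bracket l x y = (\<chi> m. \<Sum>i\<in>{1..8}. \<Sum>j\<in>{1..8}. \<Sum>k\<in>{1..8}.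
      (if idx8 k = m then x $ idx8 i * y $ idx8 j * sc_full l i j k else 0))"

definition constsA :: "((nat \<times> nat \<times> nat) \<times> real) list" where
  "constsA = [((2,3,1), 1), ((1,2,3), 1), ((1,3,2), -1),
              ((1,4,7), 1/2), ((1,5,6), 1/2), ((1,6,5), -1/2), ((1,7,4), -1/2),
              ((2,4,5), 1/2), ((2,5,4), -1/2), ((2,6,7), 1/2), ((2,7,6), -1/2),
              ((3,4,6), 1/2), ((3,5,7), -1/2), ((3,6,4), -1/2), ((3,7,5), 1/2)]"

definition constsB :: "((nat \<times> nat \<times> nat) \<times> real) list" where
  "constsB = [((1,2,2), 2), ((1,3,3), -2), ((2,3,1), 1),
              ((1,4,4), 1), ((1,5,5), -1), ((2,5,4), 1), ((3,4,5), 1),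
              ((1,6,6), 1), ((1,7,7), -1), ((2,7,6), 1), ((3,6,7), 1)]"

definition L8_3 :: "real^8 \<Rightarrow> real^8 \<Rightarrow> real^8" where
  "L8_3 = sc_bracket (constsA @ [((4,8,4), 1), ((5,8,5), 1), ((6,8,6), 1), ((7,8,7), 1)])"

definition L8_4 :: "real \<Rightarrow> real^8 \<Rightarrow> real^8 \<Rightarrow> real^8" where
  "L8_4 p = sc_bracket (constsA @ [((4,8,4), p), ((5,8,5), p), ((6,8,6), p), ((7,8,7), p),
      ((4,8,6), -1), ((5,8,7), -1), ((6,8,4), 1), ((7,8,5), 1)])"

definition L8_16 :: "real^8 \<Rightarrow> real^8 \<Rightarrow> real^8" where
  "L8_16 = sc_bracket (constsB @ [((4,8,4), 1), ((5,8,5), 1), ((6,8,4), 1), ((6,8,6), 1),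
      ((7,8,5), 1), ((7,8,7), 1)])"

definition L8_17 :: "real \<Rightarrow> real^8 \<Rightarrow> real^8 \<Rightarrow> real^8" where
  "L8_17 p = sc_bracket (constsB @ [((4,8,4), 1), ((5,8,5), 1), ((6,8,6), p), ((7,8,7), p)])"

definition L8_18 :: "real \<Rightarrow> real^8 \<Rightarrow> real^8 \<Rightarrow> real^8" where
  "L8_18 p = sc_bracket (constsB @ [((4,8,4), p), ((4,8,6), -1), ((5,8,5), p), ((5,8,7), -1),
      ((6,8,4), 1), ((6,8,6), p), ((7,8,5), 1), ((7,8,7), p)])"

end

theory Submission
  imports Defs "Jordan_Normal_Form.Jordan_Normal_Form_Existence"
begin


lemma lie_bil: "lie_algebra B \<Longrightarrow> bilinear B" by (simp add: lie_algebra_def)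

lemma lie_anti:
  assumes "lie_algebra B" shows "B x y = - B y x"
proof -
  have b: "bilinear B" using assms by (simp add: lie_algebra_def)
  have z: "\<And>x. B x x = 0" using assms by (simp add: lie_algebra_def)
  have "0 = B (x+y) (x+y)" using z by simp
  also have "\<dots> = B x x + B x y + B y x + B y y"
    by (simp add: bilinear_ladd[OF b] bilinear_radd[OF b])
  finally show ?thesis using z by (simp add: eq_neg_iff_add_eq_0)
qed

lemma lie_jac:
  assumes "lie_algebra B" shows "B x (B y z) = B (B x y) z + B y (B x z)"
proof -
  have b: "bilinear B" using assms by (simp add: lie_algebra_def)
  have j: "B x (B y z) + B y (B z x) + B z (B x y) = 0" using assms by (simp add: lie_algebra_def)
  have 1: "B y (B z x) = - B y (B x z)" using lie_anti[OF assms, of z x] bilinear_rneg[OF b] by metis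
  have 2: "B z (B x y) = - B (B x y) z" using lie_anti[OF assms] by metis
  show ?thesis using j 1 2 by (simp add: algebra_simps eq_neg_iff_add_eq_0)
qed

definition subalg :: "('a::real_vector \<Rightarrow> 'a \<Rightarrow> 'a) \<Rightarrow> 'a set \<Rightarrow> bool" where
  "subalg B N \<longleftrightarrow> Real_Vector_Spaces.subspace N \<and> (\<forall>x\<in>N. \<forall>y\<in>N. B x y \<in> N)"

lemma engel_gen:
  fixes B :: "'a::euclidean_space \<Rightarrow> 'a \<Rightarrow> 'a"
  assumes L: "lie_algebra B"
  shows "subalg B N \<Longrightarrow> (\<forall>x\<in>N. \<exists>k. \<forall>u. (B x ^^ k) u = 0) \<Longrightarrow>
     Real_Vector_Spaces.subspace U \<Longrightarrow> Real_Vector_Spaces.subspace W \<Longrightarrow> W \<subset> U \<Longrightarrow> (\<forall>x\<in>N. \<forall>u\<in>U. B x u \<in> U) \<Longrightarrow>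
     (\<forall>x\<in>N. \<forall>w\<in>W. B x w \<in> W) \<Longrightarrow> \<exists>v\<in>U. v \<notin> W \<and> (\<forall>x\<in>N. B x v \<in> W)"
proof (induction "dim N" arbitrary: N U W rule: less_induct)
  case less
  have b: "bilinear B" using L by (simp add: lie_algebra_def)
  have lin: "linear (B x)" for x using b by (simp add: bilinear_def)
  have linl: "linear (\<lambda>x. B x y)" for y using b by (simp add: bilinear_def)
  have sN: "Real_Vector_Spaces.subspace N" using less.prems(1) by (simp add: subalg_def)
  show ?case
  proof (cases "N \<subseteq> {0}")
    case True
    obtain v where v: "v \<in> U" "v \<notin> W" using less.prems(5) by blast
    have "B x v \<in> W" if "x \<in> N" for x
    proof -
      have "x = 0" using True that by blast
      hence "B x v = 0" using linear_0[OF linl[of v]] by simp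
      thus ?thesis using less.prems(4) subspace_0 by auto
    qed
    thus ?thesis using v by blast
  next
    case False
    define S where "S = {d. \<exists>K. subalg B K \<and> K \<subset> N \<and> dim K = d}"
    have "{0} \<subset> N" using False sN subspace_0 by blast
    moreover have "subalg B {0}"
      unfolding subalg_def using subspace_0[of "{0::'a}"] linear_0[OF lin] by (auto simp: real_vector.subspace_def)
    ultimately have "dim {0::'a} \<in> S" unfolding S_def by blast
    hence Sne: "S \<noteq> {}" by blast
    have Sfin: "finite S"
    proof -
      have "S \<subseteq> {..dim N}"
      proof
        fix d assume "d \<in> S"
        then obtain K where "K \<subset> N" "dim K = d" unfolding S_def by blast
        thus "d \<in> {..dim N}" using dim_subset[of K N] by auto
      qed
      thus ?thesis using finite_subset by blast
    qed
    obtain K where K: "subalg B K" "K \<subset> N" "dim K = Max S"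
      using Max_in[OF Sfin Sne] unfolding S_def by blast
    have Kmax: "dim K' \<le> dim K" if "subalg B K'" "K' \<subset> N" for K'
    proof -
      have "dim K' \<in> S" unfolding S_def using that by blast
      thus ?thesis using Max_ge[OF Sfin] K(3) by simp
    qed
    have sK: "Real_Vector_Spaces.subspace K" using K(1) by (simp add: subalg_def)
    have spK: "span K = K" using sK by (simp add: span_eq_iff)
    have spN: "span N = N" using sN by (simp add: span_eq_iff)
    have dKN: "dim K < dim N"
      using dim_psubset[of K N] K(2) spK spN by simp
    have nilK: "\<forall>x\<in>K. \<exists>k. \<forall>u. (B x ^^ k) u = 0" using less.prems(2) K(2) by blast
    obtain y where y: "y \<in> N" "y \<notin> K" "\<forall>x\<in>K. B x y \<in> K"
    proof -
      have "\<exists>v\<in>N. v \<notin> K \<and> (\<forall>x\<in>K. B x v \<in> K)"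
      proof (rule less.hyps[OF dKN K(1) nilK sN sK K(2)])
        show "\<forall>x\<in>K. \<forall>u\<in>N. B x u \<in> N" using less.prems(1) K(2) unfolding subalg_def by blast
        show "\<forall>x\<in>K. \<forall>w\<in>K. B x w \<in> K" using K(1) unfolding subalg_def by blast
      qed
      thus ?thesis using that by blast
    qed
    define K' where "K' = span (insert y K)"
    have K'eq: "K' = {z. \<exists>t. z - t *\<^sub>R y \<in> K}"
      unfolding K'_def span_insert spK by simp
    have sK': "Real_Vector_Spaces.subspace K'" unfolding K'_def by simp
    have K'N: "K' \<subseteq> N"
    proof -
      have "insert y K \<subseteq> N" using y(1) K(2) by blast
      hence "span (insert y K) \<subseteq> span N" by (rule span_mono)
      thus ?thesis unfolding K'_def spN .
    qed
    have subK': "subalg B K'"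
      unfolding subalg_def
    proof (intro conjI sK' ballI)
      fix a c assume a: "a \<in> K'" and c: "c \<in> K'"
      obtain s where s: "a - s *\<^sub>R y \<in> K" using a K'eq by blast
      obtain t where t: "c - t *\<^sub>R y \<in> K" using c K'eq by blast
      define ka where "ka = a - s *\<^sub>R y"
      define kc where "kc = c - t *\<^sub>R y"
      have ae: "a = ka + s *\<^sub>R y" and ce: "c = kc + t *\<^sub>R y" unfolding ka_def kc_def by auto
      have "B a c = B ka kc + t *\<^sub>R B ka y + s *\<^sub>R B y kc + (s*t) *\<^sub>R B y y"
        unfolding ae ce by (simp add: bilinear_ladd[OF b] bilinear_radd[OF b] bilinear_lmul[OF b]
            bilinear_rmul[OF b] algebra_simps)
      also have "B y y = 0" using L by (simp add: lie_algebra_def)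
      also have "B y kc = - B kc y" using lie_anti[OF L] by metis
      finally have e: "B a c = B ka kc + t *\<^sub>R B ka y - s *\<^sub>R B kc y" by simp
      have "B ka kc \<in> K" using K(1) s t unfolding subalg_def ka_def kc_def by blast
      moreover have "B ka y \<in> K" "B kc y \<in> K" using y(3) s t unfolding ka_def kc_def by auto
      ultimately have "B a c \<in> K" unfolding e using sK
        by (simp add: subspace_add subspace_diff subspace_scale)
      thus "B a c \<in> K'" unfolding K'_def using span_superset by blast
    qed
    have KK': "K \<subset> K'"
    proof -
      have "K \<subseteq> K'" unfolding K'_def using span_superset by blast
      moreover have "y \<in> K'" unfolding K'_def using span_superset by blast
      ultimately show ?thesis using y(2) by blast
    qed
    have K'N2: "K' = N"
    proof (rule ccontr)
      assume "K' \<noteq> N"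
      hence "K' \<subset> N" using K'N by blast
      hence "dim K' \<le> dim K" using Kmax subK' by blast
      moreover have spK': "span K' = K'" using sK' by (simp add: span_eq_iff)
      have "dim K < dim K'" using dim_psubset[of K K'] KK' spK spK' by simp
      ultimately show False by simp
    qed
    define U0 where "U0 = {u\<in>U. \<forall>x\<in>K. B x u \<in> W}"
    have sU0: "Real_Vector_Spaces.subspace U0"
      unfolding U0_def real_vector.subspace_def
    proof (intro conjI allI ballI impI)
      show "0 \<in> {u \<in> U. \<forall>x\<in>K. B x u \<in> W}"
        using less.prems(3,4) subspace_0 linear_0[OF lin] by auto
    next
      fix p q assume p: "p \<in> {u \<in> U. \<forall>x\<in>K. B x u \<in> W}" and q: "q \<in> {u \<in> U. \<forall>x\<in>K. B x u \<in> W}"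
      show "p + q \<in> {u \<in> U. \<forall>x\<in>K. B x u \<in> W}"
        using p q less.prems(3,4) by (auto simp: subspace_add linear_add[OF lin])
    next
      fix r :: real and p assume p: "p \<in> {u \<in> U. \<forall>x\<in>K. B x u \<in> W}"
      show "r *\<^sub>R p \<in> {u \<in> U. \<forall>x\<in>K. B x u \<in> W}"
        using p less.prems(3,4) by (auto simp: subspace_scale linear_scale[OF lin])
    qed
    have WU0: "W \<subset> U0"
    proof -
      have "W \<subseteq> U0" unfolding U0_def using less.prems(5,7) K(2) by blast
      moreover have "\<exists>v\<in>U. v \<notin> W \<and> (\<forall>x\<in>K. B x v \<in> W)"
      proof (rule less.hyps[OF dKN K(1) nilK less.prems(3,4,5)])
        show "\<forall>x\<in>K. \<forall>u\<in>U. B x u \<in> U" using less.prems(6) K(2) by blast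
        show "\<forall>x\<in>K. \<forall>w\<in>W. B x w \<in> W" using less.prems(7) K(2) by blast
      qed
      ultimately show ?thesis unfolding U0_def by blast
    qed
    then obtain v0 where v0: "v0 \<in> U0" "v0 \<notin> W" by blast
    have yU0: "B y u \<in> U0" if "u \<in> U0" for u
    proof -
      have "B y u \<in> U" using that less.prems(6) y(1) unfolding U0_def by blast
      moreover have "B x (B y u) \<in> W" if "x \<in> K" for x
      proof -
        have "B x (B y u) = B (B x y) u + B y (B x u)" by (rule lie_jac[OF L])
        moreover have "B (B x y) u \<in> W" using y(3) that \<open>u \<in> U0\<close> unfolding U0_def by blast
        moreover have "B y (B x u) \<in> W" using less.prems(7) y(1) that \<open>u \<in> U0\<close> unfolding U0_def by blast
        ultimately show ?thesis using less.prems(4) subspace_add by metis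
      qed
      ultimately show ?thesis unfolding U0_def by blast
    qed
    have yU0n: "(B y ^^ m) u \<in> U0" if "u \<in> U0" for m u
      using that by (induction m) (auto simp: yU0)
    obtain k where k: "\<forall>u. (B y ^^ k) u = 0" using less.prems(2) y(1) by blast
    have ex: "\<exists>m. (B y ^^ Suc m) v0 \<in> W"
    proof -
      have "(B y ^^ k) v0 \<in> W" using k less.prems(4) subspace_0 by simp
      moreover have "k \<noteq> 0" using v0(2) k less.prems(4) subspace_0 by (metis funpow_0)
      ultimately show ?thesis by (metis Suc_pred' neq0_conv)
    qed
    define m where "m = (LEAST m. (B y ^^ Suc m) v0 \<in> W)"
    have m1: "(B y ^^ Suc m) v0 \<in> W" unfolding m_def using LeastI_ex[OF ex] .
    have m2: "(B y ^^ m) v0 \<notin> W"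
    proof (cases m)
      case 0 thus ?thesis using v0(2) by simp
    next
      case (Suc m')
      have "\<not> (B y ^^ Suc m') v0 \<in> W" using not_less_Least[of m' "\<lambda>m. (B y ^^ Suc m) v0 \<in> W"]
        unfolding m_def[symmetric] using Suc by simp
      thus ?thesis using Suc by simp
    qed
    define u where "u = (B y ^^ m) v0"
    have uU0: "u \<in> U0" unfolding u_def using yU0n v0(1) by blast
    have uy: "B y u \<in> W" using m1 unfolding u_def by simp
    have "B x u \<in> W" if "x \<in> N" for x
    proof -
      have "x \<in> K'" using that K'N2 by simp
      then obtain t where t: "x - t *\<^sub>R y \<in> K" using K'eq by blast
      have "x = (x - t *\<^sub>R y) + t *\<^sub>R y" by simp
      hence "B x u = B (x - t *\<^sub>R y) u + t *\<^sub>R B y u"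
        by (metis bilinear_ladd[OF b] bilinear_lmul[OF b])
      moreover have "B (x - t *\<^sub>R y) u \<in> W" using t uU0 unfolding U0_def by blast
      ultimately show ?thesis using uy less.prems(4) by (simp add: subspace_add subspace_scale)
    qed
    moreover have "u \<in> U" using uU0 unfolding U0_def by blast
    ultimately show ?thesis using m2 unfolding u_def by blast
  qed
qed




definition br :: "nat \<Rightarrow> (nat\<Rightarrow>nat\<Rightarrow>nat\<Rightarrow>complex) \<Rightarrow> (nat\<Rightarrow>complex) \<Rightarrow> (nat\<Rightarrow>complex) \<Rightarrow> nat \<Rightarrow> complex" where
  "br n c u w l = (\<Sum>i<n. \<Sum>j<n. u i * w j * c i j l)"
definition mv :: "nat \<Rightarrow> (nat\<Rightarrow>nat\<Rightarrow>complex) \<Rightarrow> (nat\<Rightarrow>complex) \<Rightarrow> nat \<Rightarrow> complex" where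
  "mv n A u i = (\<Sum>k<n. A i k * u k)"
definition mm :: "nat \<Rightarrow> (nat\<Rightarrow>nat\<Rightarrow>complex) \<Rightarrow> (nat\<Rightarrow>nat\<Rightarrow>complex) \<Rightarrow> nat\<Rightarrow>nat\<Rightarrow>complex" where
  "mm n A B i j = (\<Sum>k<n. A i k * B k j)"
definition tr :: "nat \<Rightarrow> (nat\<Rightarrow>nat\<Rightarrow>complex) \<Rightarrow> complex" where
  "tr n A = (\<Sum>i<n. A i i)"
definition isder :: "nat \<Rightarrow> (nat\<Rightarrow>nat\<Rightarrow>nat\<Rightarrow>complex) \<Rightarrow> (nat\<Rightarrow>nat\<Rightarrow>complex) \<Rightarrow> bool" where
  "isder n c E \<longleftrightarrow> (\<forall>i<n. \<forall>j<n. \<forall>l<n. (\<Sum>k<n. c i j k * E l k) =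
      (\<Sum>m<n. E m i * c m j l) + (\<Sum>m<n. E m j * c i m l))"
definition vder :: "nat \<Rightarrow> (nat\<Rightarrow>nat\<Rightarrow>nat\<Rightarrow>complex) \<Rightarrow> (nat\<Rightarrow>nat\<Rightarrow>complex) \<Rightarrow> bool" where
  "vder n c E \<longleftrightarrow> (\<forall>u w. \<forall>l<n. mv n E (br n c u w) l = br n c (mv n E u) w l + br n c u (mv n E w) l)"
definition eqn :: "nat \<Rightarrow> (nat\<Rightarrow>complex) \<Rightarrow> (nat\<Rightarrow>complex) \<Rightarrow> bool" where
  "eqn n u v \<longleftrightarrow> (\<forall>k<n. u k = v k)"
definition dl :: "nat \<Rightarrow> nat \<Rightarrow> complex" where "dl i = (\<lambda>k. if k = i then 1 else 0)"

lemma mv_cong: "eqn n u v \<Longrightarrow> mv n A u = mv n A v"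
  unfolding eqn_def mv_def by (intro ext sum.cong) auto
lemma br_cong: "eqn n u u' \<Longrightarrow> eqn n w w' \<Longrightarrow> br n c u w = br n c u' w'"
  unfolding eqn_def br_def by (intro ext sum.cong) auto
lemma eqn_refl[simp]: "eqn n u u" by (simp add: eqn_def)
lemma eqn_sym: "eqn n u v \<Longrightarrow> eqn n v u" by (simp add: eqn_def)
lemma eqn_trans: "eqn n u v \<Longrightarrow> eqn n v w \<Longrightarrow> eqn n u w" by (simp add: eqn_def)

lemma mv_add: "mv n A (\<lambda>k. u k + v k) i = mv n A u i + mv n A v i"
  unfolding mv_def by (simp add: distrib_left sum.distrib)
lemma mv_smult: "mv n A (\<lambda>k. a * u k) i = a * mv n A u i"
  unfolding mv_def by (simp add: sum_distrib_left algebra_simps)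
lemma mv_zero: "mv n A (\<lambda>k. 0) i = 0" unfolding mv_def by simp
lemma mv_mm: "mv n (mm n A B) u = mv n A (mv n B u)"
  unfolding mv_def mm_def by (auto simp: sum_distrib_left sum_distrib_right mult.assoc intro!: ext sum.swap[THEN trans])
lemma mm_assoc: "mm n (mm n A B) C = mm n A (mm n B C)"
  unfolding mm_def by (auto simp: sum_distrib_left sum_distrib_right mult.assoc intro!: ext sum.swap[THEN trans])
lemma tr_mm_comm: "tr n (mm n A B) = tr n (mm n B A)"
  unfolding tr_def mm_def by (subst sum.swap) (simp add: mult.commute)

lemma br_addl: "br n c (\<lambda>k. u k + v k) w l = br n c u w l + br n c v w l"
  unfolding br_def by (simp add: distrib_right sum.distrib)
lemma br_addr: "br n c u (\<lambda>k. v k + w k) l = br n c u v l + br n c u w l"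
  unfolding br_def by (simp add: distrib_left distrib_right sum.distrib)
lemma br_smultl: "br n c (\<lambda>k. a * u k) w l = a * br n c u w l"
  unfolding br_def by (simp add: sum_distrib_left algebra_simps)
lemma br_smultr: "br n c u (\<lambda>k. a * w k) l = a * br n c u w l"
  unfolding br_def by (simp add: sum_distrib_left algebra_simps)
lemma br_zerol: "eqn n u (\<lambda>k. 0) \<Longrightarrow> br n c u w l = 0"
  unfolding eqn_def br_def by (intro sum.neutral ballI) auto
lemma br_zeror: "eqn n w (\<lambda>k. 0) \<Longrightarrow> br n c u w l = 0"
  unfolding eqn_def br_def by (intro sum.neutral ballI) auto

lemma isder_vder:
  assumes "isder n c E" shows "vder n c E"
  unfolding vder_def
proof (intro allI impI)
  fix u w :: "nat \<Rightarrow> complex" and l assume l: "l < n"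
  have "mv n E (br n c u w) l = (\<Sum>i<n. \<Sum>j<n. u i * w j * (\<Sum>k<n. c i j k * E l k))"
    unfolding mv_def br_def
    by (simp add: sum_distrib_left sum_distrib_right mult_ac, subst sum.swap, rule sum.cong, simp,
        subst sum.swap, simp)
  also have "\<dots> = (\<Sum>i<n. \<Sum>j<n. u i * w j * ((\<Sum>m<n. E m i * c m j l) + (\<Sum>m<n. E m j * c i m l)))"
    using assms l unfolding isder_def by (intro sum.cong refl) simp
  also have "\<dots> = (\<Sum>i<n. \<Sum>j<n. \<Sum>m<n. u i * w j * E m i * c m j l) + (\<Sum>i<n. \<Sum>j<n. \<Sum>m<n. u i * w j * E m j * c i m l)"
    by (simp add: distrib_left sum.distrib sum_distrib_left mult_ac)
  also have "(\<Sum>i<n. \<Sum>j<n. \<Sum>m<n. u i * w j * E m i * c m j l) = br n c (mv n E u) w l"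
  proof -
    have "(\<Sum>i<n. \<Sum>j<n. \<Sum>m<n. u i * w j * E m i * c m j l) = (\<Sum>i<n. \<Sum>m<n. \<Sum>j<n. u i * w j * E m i * c m j l)"
      by (rule sum.cong, simp, rule sum.swap)
    also have "\<dots> = (\<Sum>m<n. \<Sum>i<n. \<Sum>j<n. u i * w j * E m i * c m j l)" by (rule sum.swap)
    also have "\<dots> = br n c (mv n E u) w l" unfolding br_def mv_def
      by (simp add: sum_distrib_left sum_distrib_right mult_ac, rule sum.cong, simp, rule sum.swap)
    finally show ?thesis .
  qed
  also have "(\<Sum>i<n. \<Sum>j<n. \<Sum>m<n. u i * w j * E m j * c i m l) = br n c u (mv n E w) l"
    unfolding br_def mv_def
    by (simp add: sum_distrib_left sum_distrib_right mult_ac, rule sum.cong, simp, rule sum.swap)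
  finally show "mv n E (br n c u w) l = br n c (mv n E u) w l + br n c u (mv n E w) l" .
qed

lemma mv_dl: "mv n A (dl i) m = (if i < n then A m i else 0)"
  unfolding mv_def dl_def by (simp add: if_distrib cong: if_cong)
lemma sum_dl1: "i < n \<Longrightarrow> (\<Sum>k<n. dl i k * f k) = f i"
proof -
  assume "i < n"
  have "(\<Sum>k<n. dl i k * f k) = (\<Sum>k<n. if k = i then f k else 0)"
    unfolding dl_def by (rule sum.cong) auto
  thus ?thesis using \<open>i < n\<close> by (simp add: sum.delta)
qed
lemma br_dll: "i < n \<Longrightarrow> br n c (dl i) w l = (\<Sum>j<n. w j * c i j l)"
  unfolding br_def by (simp add: mult.assoc flip: sum_distrib_left, rule sum_dl1)
lemma br_dlr: "j < n \<Longrightarrow> br n c u (dl j) l = (\<Sum>i<n. u i * c i j l)"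
  unfolding br_def by (rule sum.cong, simp, simp add: mult.assoc mult.left_commute[of "u _"] flip: sum_distrib_left,
     simp add: sum_distrib_left[symmetric] sum_dl1)
lemma br_dl: "i < n \<Longrightarrow> j < n \<Longrightarrow> br n c (dl i) (dl j) l = c i j l"
  using br_dll[of i n c "dl j" l] sum_dl1[of j n "\<lambda>j. c i j l"] by simp

lemma vder_isder:
  assumes "vder n c E" shows "isder n c E"
  unfolding isder_def
proof (intro allI impI)
  fix i j l assume ijl: "i < n" "j < n" "l < n"
  have "mv n E (br n c (dl i) (dl j)) l = br n c (mv n E (dl i)) (dl j) l + br n c (dl i) (mv n E (dl j)) l"
    using assms ijl(3) unfolding vder_def by blast
  moreover have "mv n E (br n c (dl i) (dl j)) l = (\<Sum>k<n. c i j k * E l k)"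
    unfolding mv_def using br_dl[OF ijl(1,2)] by (simp add: mult.commute)
  moreover have "br n c (mv n E (dl i)) (dl j) l = (\<Sum>m<n. E m i * c m j l)"
    using ijl by (simp add: br_dlr mv_dl)
  moreover have "br n c (dl i) (mv n E (dl j)) l = (\<Sum>m<n. E m j * c i m l)"
    using ijl by (simp add: br_dll mv_dl)
  ultimately show "(\<Sum>k<n. c i j k * E l k) = (\<Sum>m<n. E m i * c m j l) + (\<Sum>m<n. E m j * c i m l)"
    by simp
qed

definition sh :: "nat \<Rightarrow> (nat\<Rightarrow>nat\<Rightarrow>complex) \<Rightarrow> complex \<Rightarrow> (nat\<Rightarrow>complex) \<Rightarrow> nat \<Rightarrow> complex" where
  "sh n X a u = (\<lambda>k. mv n X u k - a * u k)"

lemma sh_add: "sh n X a (\<lambda>k. u k + v k) = (\<lambda>k. sh n X a u k + sh n X a v k)"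
  unfolding sh_def by (auto simp: mv_add algebra_simps)
lemma sh_pow_add: "(sh n X a ^^ m) (\<lambda>k. u k + v k) = (\<lambda>k. (sh n X a ^^ m) u k + (sh n X a ^^ m) v k)"
  by (induction m) (auto simp: sh_add)
lemma sh_zero: "sh n X a (\<lambda>k. 0) = (\<lambda>k. 0)"
  unfolding sh_def by (auto simp: mv_zero)
lemma sh_pow_zero: "(sh n X a ^^ m) (\<lambda>k. 0) = (\<lambda>k. 0)"
  by (induction m) (auto simp: sh_zero)
lemma sh_cong: "eqn n u v \<Longrightarrow> eqn n (sh n X a u) (sh n X a v)"
  unfolding sh_def using mv_cong[of n u v X] by (simp add: eqn_def)
lemma sh_pow_cong: "eqn n u v \<Longrightarrow> eqn n ((sh n X a ^^ m) u) ((sh n X a ^^ m) v)"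
  by (induction m) (auto simp: sh_cong)

lemma br_subl: "br n c (\<lambda>k. u k - a * v k) w l = br n c u w l - a * br n c v w l"
  unfolding br_def by (simp add: sum_distrib_left algebra_simps sum_subtractf)
lemma br_subr: "br n c u (\<lambda>k. w k - a * v k) l = br n c u w l - a * br n c u v l"
  unfolding br_def by (simp add: sum_distrib_left algebra_simps sum_subtractf)

lemma vder_sh:
  assumes "vder n c X"
  shows "eqn n (sh n X (a+b) (br n c u w)) (\<lambda>k. br n c (sh n X a u) w k + br n c u (sh n X b w) k)"
  unfolding eqn_def
proof (intro allI impI)
  fix l assume l: "l < n"
  have "sh n X (a+b) (br n c u w) l = br n c (mv n X u) w l + br n c u (mv n X w) l - (a+b) * br n c u w l"
    unfolding sh_def using assms l unfolding vder_def by simp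
  also have "\<dots> = br n c (sh n X a u) w l + br n c u (sh n X b w) l"
    unfolding sh_def br_subl br_subr by (simp add: algebra_simps)
  finally show "sh n X (a+b) (br n c u w) l = br n c (sh n X a u) w l + br n c u (sh n X b w) l" .
qed

lemma br_nil:
  assumes X: "vder n c X"
  shows "eqn n ((sh n X a ^^ p) u) (\<lambda>k. 0) \<Longrightarrow> eqn n ((sh n X b ^^ q) w) (\<lambda>k. 0) \<Longrightarrow>
    eqn n ((sh n X (a+b) ^^ (p+q)) (br n c u w)) (\<lambda>k. 0)"
proof (induction "p+q" arbitrary: p q u w)
  case 0
  hence "eqn n u (\<lambda>k. 0)" by simp
  hence "br n c u w = (\<lambda>k. 0)" using br_zerol by blast
  thus ?case using 0 by simp
next
  case (Suc N)
  show ?case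
  proof (cases p)
    case 0
    hence "eqn n u (\<lambda>k. 0)" using Suc.prems by simp
    hence "br n c u w = (\<lambda>k. 0)" using br_zerol by blast
    thus ?thesis by (simp add: sh_pow_zero)
  next
    case (Suc p')
    show ?thesis
    proof (cases q)
      case 0
      hence "eqn n w (\<lambda>k. 0)" using Suc.prems by simp
      hence "br n c u w = (\<lambda>k. 0)" using br_zeror by blast
      thus ?thesis by (simp add: sh_pow_zero)
    next
      case (Suc q')
      have pq: "p + q = Suc (p' + q)" using \<open>p = Suc p'\<close> by simp
      have "(sh n X (a+b) ^^ (p+q)) (br n c u w) = (sh n X (a+b) ^^ (p'+q)) (sh n X (a+b) (br n c u w))"
        unfolding pq funpow_Suc_right by simp
      have e1: "eqn n ((sh n X (a+b) ^^ (p+q)) (br n c u w))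
          ((sh n X (a+b) ^^ (p'+q)) (\<lambda>k. br n c (sh n X a u) w k + br n c u (sh n X b w) k))"
        unfolding pq funpow_Suc_right comp_def by (rule sh_pow_cong[OF vder_sh[OF X]])
      have i1: "eqn n ((sh n X (a+b) ^^ (p'+q)) (br n c (sh n X a u) w)) (\<lambda>k. 0)"
      proof (rule Suc.hyps)
        show "N = p' + q" using Suc.hyps(2) pq by simp
        show "eqn n ((sh n X a ^^ p') (sh n X a u)) (\<lambda>k. 0)"
          using Suc.prems(1) \<open>p = Suc p'\<close> by (simp add: funpow_Suc_right del: funpow.simps)
        show "eqn n ((sh n X b ^^ q) w) (\<lambda>k. 0)" by fact
      qed
      have pq2: "p' + q = p + q'" using \<open>p = Suc p'\<close> \<open>q = Suc q'\<close> by simp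
      have i2: "eqn n ((sh n X (a+b) ^^ (p'+q)) (br n c u (sh n X b w))) (\<lambda>k. 0)"
        unfolding pq2
      proof (rule Suc.hyps)
        show "N = p + q'" using Suc.hyps(2) pq pq2 by simp
        show "eqn n ((sh n X b ^^ q') (sh n X b w)) (\<lambda>k. 0)"
          using Suc.prems(2) \<open>q = Suc q'\<close> by (simp add: funpow_Suc_right del: funpow.simps)
        show "eqn n ((sh n X a ^^ p) u) (\<lambda>k. 0)" by fact
      qed
      show ?thesis using e1 i1 i2 unfolding sh_pow_add by (simp add: eqn_def)
    qed
  qed
qed

definition uptri :: "nat \<Rightarrow> (nat\<Rightarrow>nat\<Rightarrow>complex) \<Rightarrow> bool" where
  "uptri n J \<longleftrightarrow> (\<forall>i<n. \<forall>j<n. j < i \<longrightarrow> J i j = 0) \<and>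
     (\<forall>i<n. \<forall>j<n. i \<noteq> j \<longrightarrow> J i j \<noteq> 0 \<longrightarrow> J i i = J j j)"

lemma sh_split: "k < n \<Longrightarrow> sh n J a v k = (J k k - a) * v k + (\<Sum>j\<in>{..<n}-{k}. J k j * v j)"
  unfolding sh_def mv_def by (simp add: sum.remove[of "{..<n}" k] algebra_simps)

lemma claimA_step:
  assumes U: "uptri n J"
    and P: "\<forall>k<n. v k \<noteq> 0 \<longrightarrow> J k k = a \<and> k < Suc m"
  shows "\<forall>k<n. sh n J a v k \<noteq> 0 \<longrightarrow> J k k = a \<and> k < m"
proof (intro allI impI)
  fix k assume k: "k < n" and nz: "sh n J a v k \<noteq> 0"
  have h: "(J k k - a) * v k = 0" using P k by (cases "v k = 0") auto
  have "sh n J a v k = (\<Sum>j\<in>{..<n}-{k}. J k j * v j)" using sh_split[OF k] h by simp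
  hence "(\<Sum>j\<in>{..<n}-{k}. J k j * v j) \<noteq> 0" using nz by simp
  then obtain j where j: "j \<in> {..<n}-{k}" "J k j * v j \<noteq> 0" by (meson sum.neutral)
  have jn: "j < n" "j \<noteq> k" using j by auto
  have vj: "J j j = a" "j < Suc m" using P jn(1) j(2) by auto
  have "\<not> j < k" using U jn k j(2) unfolding uptri_def by auto
  hence "k < j" using jn by simp
  moreover have "J k k = J j j" using U jn k j(2) unfolding uptri_def by auto
  ultimately show "J k k = a \<and> k < m" using vj by simp
qed

lemma claimA_pow:
  assumes U: "uptri n J"
  shows "(\<forall>k<n. v k \<noteq> 0 \<longrightarrow> J k k = a \<and> k < m) \<Longrightarrow> eqn n ((sh n J a ^^ m) v) (\<lambda>k. 0)"
proof (induction m arbitrary: v)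
  case 0 thus ?case by (auto simp: eqn_def)
next
  case (Suc m)
  have "eqn n ((sh n J a ^^ m) (sh n J a v)) (\<lambda>k. 0)"
    by (rule Suc.IH[OF claimA_step[OF U Suc.prems]])
  thus ?case by (simp add: funpow_Suc_right del: funpow.simps)
qed

lemma claimA:
  assumes U: "uptri n J" and i: "i < n" "J i i = a"
  shows "eqn n ((sh n J a ^^ n) (dl i)) (\<lambda>k. 0)"
  by (rule claimA_pow[OF U]) (auto simp: dl_def i)

lemma claimA_all:
  assumes U: "uptri n J" and d: "\<forall>i<n. J i i = 0"
  shows "eqn n ((sh n J 0 ^^ n) v) (\<lambda>k. 0)"
  by (rule claimA_pow[OF U]) (auto simp: d)

lemma claimB:
  assumes U: "uptri n J" and z: "eqn n ((sh n J a ^^ N) w) (\<lambda>k. 0)"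
  shows "\<forall>k<n. J k k \<noteq> a \<longrightarrow> w k = 0"
proof (rule ccontr)
  assume "\<not> (\<forall>k<n. J k k \<noteq> a \<longrightarrow> w k = 0)"
  hence ne: "{k. k < n \<and> J k k \<noteq> a \<and> w k \<noteq> 0} \<noteq> {}" by auto
  define k where "k = Max {k. k < n \<and> J k k \<noteq> a \<and> w k \<noteq> 0}"
  have fin: "finite {k. k < n \<and> J k k \<noteq> a \<and> w k \<noteq> 0}" by simp
  have k: "k < n" "J k k \<noteq> a" "w k \<noteq> 0" using Max_in[OF fin ne] unfolding k_def by auto
  have kmax: "w j = 0" if "j < n" "k < j" "J j j \<noteq> a" for j
  proof (rule ccontr)
    assume "w j \<noteq> 0"
    hence "j \<le> k" unfolding k_def using Max_ge[OF fin] that by auto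
    thus False using that by simp
  qed
  have inv: "(sh n J a ^^ m) w k = (J k k - a)^m * w k \<and>
      (\<forall>j<n. k < j \<longrightarrow> J j j \<noteq> a \<longrightarrow> (sh n J a ^^ m) w j = 0)" for m
  proof (induction m)
    case 0 thus ?case using kmax by auto
  next
    case (Suc m)
    define v where "v = (sh n J a ^^ m) w"
    have vk: "v k = (J k k - a)^m * w k" and vj: "\<forall>j<n. k < j \<longrightarrow> J j j \<noteq> a \<longrightarrow> v j = 0"
      using Suc.IH unfolding v_def by auto
    have rest: "(\<Sum>i\<in>{..<n}-{j}. J j i * v i) = 0" if j: "j < n" "k \<le> j" "J j j \<noteq> a" for j
    proof (rule sum.neutral, rule ballI)
      fix i assume i: "i \<in> {..<n}-{j}"
      show "J j i * v i = 0"
      proof (cases "J j i = 0")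
        case False
        have "\<not> i < j" using U i j False unfolding uptri_def by auto
        hence "j < i" using i by auto
        moreover have "J j j = J i i" using U i j False unfolding uptri_def by auto
        ultimately show ?thesis using vj i j by auto
      qed simp
    qed
    have e: "(sh n J a ^^ Suc m) w = sh n J a v" unfolding v_def by simp
    have "sh n J a v k = (J k k - a) * v k" using sh_split[OF k(1)] rest[OF k(1) _ k(2)] by simp
    also have "\<dots> = (J k k - a) ^ Suc m * w k" using vk by simp
    finally have 1: "sh n J a v k = (J k k - a) ^ Suc m * w k" .
    have 2: "\<forall>j<n. k < j \<longrightarrow> J j j \<noteq> a \<longrightarrow> sh n J a v j = 0"
      using sh_split rest vj by auto
    show ?case unfolding e using 1 2 by blast
  qed
  have "(sh n J a ^^ N) w k = 0" using z k(1) by (simp add: eqn_def)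
  moreover have "(J k k - a)^N * w k \<noteq> 0" using k by simp
  ultimately show False using inv[of N] by simp
qed

lemma br_suml: "finite I \<Longrightarrow> br n c (\<lambda>a. \<Sum>i\<in>I. f i a) w l = (\<Sum>i\<in>I. br n c (f i) w l)"
proof (induction I rule: finite_induct)
  case empty thus ?case unfolding br_def by simp
next
  case (insert x F) thus ?case by (simp add: br_addl)
qed
lemma br_sumr: "finite I \<Longrightarrow> br n c u (\<lambda>a. \<Sum>i\<in>I. f i a) l = (\<Sum>i\<in>I. br n c u (f i) l)"
proof (induction I rule: finite_induct)
  case empty thus ?case unfolding br_def by simp
next
  case (insert x F) thus ?case by (simp add: br_addr)
qed
lemma mv_sum: "finite I \<Longrightarrow> mv n A (\<lambda>a. \<Sum>i\<in>I. f i a) l = (\<Sum>i\<in>I. mv n A (f i) l)"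
proof (induction I rule: finite_induct)
  case empty thus ?case unfolding mv_def by simp
next
  case (insert x F) thus ?case by (simp add: mv_add)
qed

lemma br_mvP: "br n c (mv n P u) (mv n P w) k = (\<Sum>i<n. \<Sum>j<n. u i * w j * br n c (\<lambda>a. P a i) (\<lambda>a. P a j) k)"
proof -
  have mu: "mv n P u = (\<lambda>a. \<Sum>i<n. u i * P a i)" unfolding mv_def by (simp add: mult.commute)
  have mw: "mv n P w = (\<lambda>a. \<Sum>j<n. w j * P a j)" unfolding mv_def by (simp add: mult.commute)
  show ?thesis unfolding mu mw
    by (simp add: br_suml br_sumr br_smultl br_smultr sum_distrib_left mult.assoc)
qed

definition cb :: "nat \<Rightarrow> (nat\<Rightarrow>nat\<Rightarrow>nat\<Rightarrow>complex) \<Rightarrow> (nat\<Rightarrow>nat\<Rightarrow>complex) \<Rightarrow> (nat\<Rightarrow>nat\<Rightarrow>complex) \<Rightarrow> nat\<Rightarrow>nat\<Rightarrow>nat\<Rightarrow>complex" where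
  "cb n c P Q i j l = mv n Q (br n c (\<lambda>a. P a i) (\<lambda>a. P a j)) l"

lemma CB: "br n (cb n c P Q) u w l = mv n Q (br n c (mv n P u) (mv n P w)) l"
proof -
  have "mv n Q (br n c (mv n P u) (mv n P w)) l =
      mv n Q (\<lambda>k. \<Sum>i<n. \<Sum>j<n. u i * w j * br n c (\<lambda>a. P a i) (\<lambda>a. P a j) k) l"
    using br_mvP by metis
  also have "\<dots> = (\<Sum>i<n. \<Sum>j<n. u i * w j * cb n c P Q i j l)"
    unfolding cb_def by (simp add: mv_sum mv_smult[symmetric] mult.assoc)
  finally show ?thesis unfolding br_def by simp
qed

lemma mv_id: "(\<forall>i<n. \<forall>j<n. A i j = (if i = j then 1 else 0)) \<Longrightarrow> eqn n (mv n A u) u"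
  unfolding eqn_def
proof (intro allI impI)
  fix k assume A: "\<forall>i<n. \<forall>j<n. A i j = (if i = j then 1 else 0)" and k: "k < n"
  have "mv n A u k = (\<Sum>j<n. dl k j * u j)" unfolding mv_def dl_def using A k
    by (intro sum.cong) auto
  thus "mv n A u k = u k" using sum_dl1[OF k] by simp
qed


lemma tr_cong_l: "(\<forall>i<n. \<forall>k<n. A i k = A' i k) \<Longrightarrow> tr n (mm n A B) = tr n (mm n A' B)"
  unfolding tr_def mm_def by (intro sum.cong refl) auto
lemma tr_cong_r: "(\<forall>i<n. \<forall>k<n. B i k = B' i k) \<Longrightarrow> tr n (mm n A B) = tr n (mm n A B')"
  unfolding tr_def mm_def by (intro sum.cong refl) auto

lemma mm_idl: assumes "\<forall>i<n. \<forall>j<n. A i j = (if i = j then 1 else 0)" "i < n"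
  shows "mm n A Y i k = Y i k"
proof -
  have "mm n A Y i k = (\<Sum>a<n. dl i a * Y a k)" unfolding mm_def
    by (rule sum.cong) (use assms in \<open>auto simp: dl_def\<close>)
  thus ?thesis using sum_dl1[OF assms(2)] by simp
qed
lemma mm_idr: assumes "\<forall>i<n. \<forall>j<n. A i j = (if i = j then 1 else 0)" "k < n"
  shows "mm n Y A i k = Y i k"
proof -
  have "mm n Y A i k = (\<Sum>a<n. dl k a * Y i a)" unfolding mm_def
    by (rule sum.cong) (use assms in \<open>auto simp: dl_def\<close>)
  thus ?thesis using sum_dl1[OF assms(2)] by simp
qed

lemma spectral_core:
  assumes PQ: "\<forall>i<n. \<forall>j<n. mm n P Q i j = (if i = j then 1 else 0)"
    and QP: "\<forall>i<n. \<forall>j<n. mm n Q P i j = (if i = j then 1 else 0)"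
    and DJ: "\<forall>i<n. \<forall>j<n. D i j = mm n P (mm n J Q) i j"
    and U: "uptri n J"
    and derD: "isder n c D"
    and hyp: "\<forall>E. isder n c E \<longrightarrow> tr n (mm n D E) = 0"
  shows "eqn n ((mv n D ^^ n) u) (\<lambda>k. 0)"
proof -
  have pq: "eqn n (mv n P (mv n Q v)) v" for v
    using mv_id[OF PQ] by (simp add: mv_mm[symmetric])
  have qp: "eqn n (mv n Q (mv n P v)) v" for v
    using mv_id[OF QP] by (simp add: mv_mm[symmetric])
  have dv: "eqn n (mv n D v) (mv n P (mv n J (mv n Q v)))" for v
  proof -
    have "eqn n (mv n D v) (mv n (mm n P (mm n J Q)) v)"
      unfolding eqn_def mv_def using DJ by (intro allI impI sum.cong) auto
    thus ?thesis by (simp add: mv_mm)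
  qed
  have vD: "vder n c D" by (rule isder_vder[OF derD])
  define c' where "c' = cb n c P Q"
  have CB': "br n c' u w = mv n Q (br n c (mv n P u) (mv n P w))" for u w
    unfolding c'_def using CB by blast
  have Jv: "eqn n (mv n J v) (mv n Q (mv n D (mv n P v)))" for v
  proof -
    have "mv n Q (mv n D (mv n P v)) = mv n Q (mv n P (mv n J (mv n Q (mv n P v))))"
      by (rule mv_cong[OF dv])
    moreover have "eqn n (mv n Q (mv n P (mv n J (mv n Q (mv n P v))))) (mv n J (mv n Q (mv n P v)))"
      by (rule qp)
    moreover have "mv n J (mv n Q (mv n P v)) = mv n J v" by (rule mv_cong[OF qp])
    ultimately show ?thesis by (simp add: eqn_def)
  qed
  have PJ: "eqn n (mv n P (mv n J v)) (mv n D (mv n P v))" for v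
  proof -
    have "eqn n (mv n D (mv n P v)) (mv n P (mv n J (mv n Q (mv n P v))))" by (rule dv)
    moreover have "mv n J (mv n Q (mv n P v)) = mv n J v" by (rule mv_cong[OF qp])
    ultimately show ?thesis by (simp add: eqn_def)
  qed
  have vJ: "vder n c' J"
    unfolding vder_def
  proof (intro allI impI)
    fix u w :: "nat \<Rightarrow> complex" and l assume l: "l < n"
    have "mv n J (br n c' u w) l = mv n Q (mv n D (mv n P (br n c' u w))) l"
      using Jv l by (simp add: eqn_def)
    also have "mv n P (br n c' u w) = mv n P (mv n Q (br n c (mv n P u) (mv n P w)))" by (simp add: CB')
    also have "mv n D \<dots> = mv n D (br n c (mv n P u) (mv n P w))" by (rule mv_cong[OF pq])
    also have "mv n Q \<dots> = mv n Q (\<lambda>k. br n c (mv n D (mv n P u)) (mv n P w) k +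
        br n c (mv n P u) (mv n D (mv n P w)) k)"
      by (rule mv_cong) (use vD in \<open>simp add: vder_def eqn_def\<close>)
    also have "\<dots> l = mv n Q (br n c (mv n D (mv n P u)) (mv n P w)) l +
        mv n Q (br n c (mv n P u) (mv n D (mv n P w))) l" by (simp add: mv_add)
    also have "br n c (mv n D (mv n P u)) (mv n P w) = br n c (mv n P (mv n J u)) (mv n P w)"
      by (rule br_cong[OF eqn_sym[OF PJ] eqn_refl])
    also have "br n c (mv n P u) (mv n D (mv n P w)) = br n c (mv n P u) (mv n P (mv n J w))"
      by (rule br_cong[OF eqn_refl eqn_sym[OF PJ]])
    finally show "mv n J (br n c' u w) l = br n c' (mv n J u) w l + br n c' u (mv n J w) l"
      by (simp add: CB')
  qed
  \<comment> \<open>eigenvalue additivity\<close>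
  have key: "c' i j l = 0" if ijl: "i < n" "j < n" "l < n" "J l l \<noteq> J i i + J j j" for i j l
  proof -
    have "eqn n ((sh n J (J i i + J j j) ^^ (n+n)) (br n c' (dl i) (dl j))) (\<lambda>k. 0)"
      by (rule br_nil[OF vJ claimA[OF U ijl(1) refl] claimA[OF U ijl(2) refl]])
    from claimB[OF U this] ijl have "br n c' (dl i) (dl j) l = 0" by blast
    thus ?thesis using br_dl ijl by metis
  qed
  define Eb where "Eb = (\<lambda>i j. if i = j then cnj (J i i) else 0)"
  have iEb: "isder n c' Eb"
    unfolding isder_def
  proof (intro allI impI)
    fix i j l assume ijl: "i < n" "j < n" "l < n"
    have s1: "(\<Sum>k<n. c' i j k * Eb l k) = c' i j l * cnj (J l l)"
    proof -
      have "(\<Sum>k<n. c' i j k * Eb l k) = (\<Sum>k<n. if k = l then c' i j l * cnj (J l l) else 0)"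
        unfolding Eb_def by (intro sum.cong) auto
      thus ?thesis using ijl by (simp add: sum.delta)
    qed
    have s2: "(\<Sum>m<n. Eb m i * c' m j l) = cnj (J i i) * c' i j l"
    proof -
      have "(\<Sum>m<n. Eb m i * c' m j l) = (\<Sum>m<n. if m = i then cnj (J i i) * c' i j l else 0)"
        unfolding Eb_def by (intro sum.cong) auto
      thus ?thesis using ijl by (simp add: sum.delta)
    qed
    have s3: "(\<Sum>m<n. Eb m j * c' i m l) = cnj (J j j) * c' i j l"
    proof -
      have "(\<Sum>m<n. Eb m j * c' i m l) = (\<Sum>m<n. if m = j then cnj (J j j) * c' i j l else 0)"
        unfolding Eb_def by (intro sum.cong) auto
      thus ?thesis using ijl by (simp add: sum.delta)
    qed
    show "(\<Sum>k<n. c' i j k * Eb l k) = (\<Sum>m<n. Eb m i * c' m j l) + (\<Sum>m<n. Eb m j * c' i m l)"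
      unfolding s1 s2 s3
    proof (cases "J l l = J i i + J j j")
      case True thus "c' i j l * cnj (J l l) = cnj (J i i) * c' i j l + cnj (J j j) * c' i j l"
        by (simp add: algebra_simps)
    next
      case False thus "c' i j l * cnj (J l l) = cnj (J i i) * c' i j l + cnj (J j j) * c' i j l"
        using key ijl by simp
    qed
  qed
  have vEb: "vder n c' Eb" by (rule isder_vder[OF iEb])
  define E where "E = mm n P (mm n Eb Q)"
  have Ev: "mv n E v = mv n P (mv n Eb (mv n Q v))" for v unfolding E_def by (simp add: mv_mm)
  have vE: "vder n c E"
    unfolding vder_def
  proof (intro allI impI)
    fix u w :: "nat \<Rightarrow> complex" and l assume l: "l < n"
    have "br n c u w = br n c (mv n P (mv n Q u)) (mv n P (mv n Q w))"
      by (rule br_cong[OF eqn_sym[OF pq] eqn_sym[OF pq]])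
    hence e1: "mv n Q (br n c u w) = br n c' (mv n Q u) (mv n Q w)" by (simp add: CB')
    have "mv n E (br n c u w) l = mv n P (mv n Eb (br n c' (mv n Q u) (mv n Q w))) l"
      unfolding Ev e1 ..
    also have "mv n P (mv n Eb (br n c' (mv n Q u) (mv n Q w))) =
       mv n P (\<lambda>k. br n c' (mv n Eb (mv n Q u)) (mv n Q w) k + br n c' (mv n Q u) (mv n Eb (mv n Q w)) k)"
      by (rule mv_cong) (use vEb in \<open>simp add: vder_def eqn_def\<close>)
    also have "\<dots> l = mv n P (br n c' (mv n Eb (mv n Q u)) (mv n Q w)) l +
       mv n P (br n c' (mv n Q u) (mv n Eb (mv n Q w))) l" by (simp add: mv_add)
    also have "mv n P (br n c' (mv n Eb (mv n Q u)) (mv n Q w)) l = br n c (mv n E u) w l"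
    proof -
      have "mv n P (br n c' (mv n Eb (mv n Q u)) (mv n Q w)) l =
          br n c (mv n P (mv n Eb (mv n Q u))) (mv n P (mv n Q w)) l"
        using pq l by (simp add: CB' eqn_def)
      also have "\<dots> = br n c (mv n E u) w l" unfolding Ev by (rule fun_cong[OF br_cong[OF eqn_refl pq]])
      finally show ?thesis .
    qed
    also have "mv n P (br n c' (mv n Q u) (mv n Eb (mv n Q w))) l = br n c u (mv n E w) l"
    proof -
      have "mv n P (br n c' (mv n Q u) (mv n Eb (mv n Q w))) l =
          br n c (mv n P (mv n Q u)) (mv n P (mv n Eb (mv n Q w))) l"
        using pq l by (simp add: CB' eqn_def)
      also have "\<dots> = br n c u (mv n E w) l" unfolding Ev by (rule fun_cong[OF br_cong[OF pq eqn_refl]])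
      finally show ?thesis .
    qed
    finally show "mv n E (br n c u w) l = br n c (mv n E u) w l + br n c u (mv n E w) l" .
  qed
  have iE: "isder n c E" by (rule vder_isder[OF vE])
  have "tr n (mm n D E) = tr n (mm n (mm n P (mm n J Q)) E)" by (rule tr_cong_l) (use DJ in auto)
  also have "\<dots> = tr n (mm n P (mm n (mm n J Q) E))" by (simp add: mm_assoc)
  also have "\<dots> = tr n (mm n (mm n (mm n J Q) E) P)" by (rule tr_mm_comm)
  also have "\<dots> = tr n (mm n J (mm n Q (mm n E P)))" by (simp add: mm_assoc)
  also have "\<dots> = tr n (mm n J Eb)"
  proof (rule tr_cong_r, intro allI impI)
    fix i k assume ik: "i < n" "k < n"
    have "mm n Q (mm n E P) = mm n (mm n Q P) (mm n Eb (mm n Q P))" unfolding E_def by (simp add: mm_assoc)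
    hence "mm n Q (mm n E P) i k = mm n (mm n Q P) (mm n Eb (mm n Q P)) i k" by simp
    also have "\<dots> = mm n Eb (mm n Q P) i k" by (rule mm_idl[OF QP ik(1)])
    also have "\<dots> = Eb i k" by (rule mm_idr[OF QP ik(2)])
    finally show "mm n Q (mm n E P) i k = Eb i k" .
  qed
  also have "\<dots> = (\<Sum>i<n. J i i * cnj (J i i))"
    unfolding tr_def mm_def
  proof (rule sum.cong, simp)
    fix i assume "i \<in> {..<n}"
    have "(\<Sum>k<n. J i k * Eb k i) = (\<Sum>k<n. if k = i then J i i * cnj (J i i) else 0)"
      unfolding Eb_def by (intro sum.cong) auto
    thus "(\<Sum>k<n. J i k * Eb k i) = J i i * cnj (J i i)" using \<open>i \<in> {..<n}\<close> by (simp add: sum.delta)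
  qed
  finally have "(\<Sum>i<n. J i i * cnj (J i i)) = 0" using hyp iE by simp
  hence "complex_of_real (\<Sum>i<n. (Re (J i i))\<^sup>2 + (Im (J i i))\<^sup>2) = 0" by (simp add: complex_mult_cnj)
  hence "(\<Sum>i<n. (Re (J i i))\<^sup>2 + (Im (J i i))\<^sup>2) = 0" by (simp only: of_real_eq_0_iff)
  hence "\<forall>i\<in>{..<n}. (Re (J i i))\<^sup>2 + (Im (J i i))\<^sup>2 = 0"
    by (subst (asm) sum_nonneg_eq_0_iff) auto
  hence J0: "\<forall>i<n. J i i = 0" by (simp add: complex_eq_iff add_nonneg_eq_0_iff)
  have shJ: "sh n J 0 = mv n J" unfolding sh_def by auto
  have Jn: "eqn n ((mv n J ^^ n) v) (\<lambda>k. 0)" for v using claimA_all[OF U J0, of v] unfolding shJ .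
  have Dm: "eqn n ((mv n D ^^ m) u) (mv n P ((mv n J ^^ m) (mv n Q u)))" for m
  proof (induction m)
    case 0 show ?case using pq by (simp add: eqn_sym)
  next
    case (Suc m)
    have "(mv n D ^^ Suc m) u = mv n D (mv n P ((mv n J ^^ m) (mv n Q u)))"
      using mv_cong[OF Suc.IH] by simp
    moreover have "eqn n (mv n D (mv n P ((mv n J ^^ m) (mv n Q u))))
       (mv n P (mv n J (mv n Q (mv n P ((mv n J ^^ m) (mv n Q u))))))" by (rule dv)
    moreover have "mv n J (mv n Q (mv n P ((mv n J ^^ m) (mv n Q u)))) = mv n J ((mv n J ^^ m) (mv n Q u))"
      by (rule mv_cong[OF qp])
    ultimately show ?case by simp
  qed
  have "mv n P ((mv n J ^^ n) (mv n Q u)) = mv n P (\<lambda>k. 0)" by (rule mv_cong[OF Jn])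
  hence "eqn n ((mv n D ^^ n) u) (mv n P (\<lambda>k. 0))" using Dm[of n] by simp
  thus ?thesis by (simp add: mv_zero eqn_def)
qed




lemma jm_bp: "i < sum_list (map fst n_as) \<Longrightarrow> j < sum_list (map fst n_as) \<Longrightarrow> i \<noteq> j \<Longrightarrow>
  jordan_matrix n_as $$ (i,j) \<noteq> 0 \<Longrightarrow> jordan_matrix n_as $$ (i,i) = jordan_matrix n_as $$ (j,j)"
proof (induction n_as arbitrary: i j)
  case Nil thus ?case by simp
next
  case (Cons ma rest)
  obtain m a where ma: "ma = (m,a)" by force
  let ?R = "jordan_matrix rest"
  let ?s = "sum_list (map fst rest)"
  have dR: "dim_row ?R = ?s" "dim_col ?R = ?s" by auto
  have eq: "jordan_matrix (ma # rest) = four_block_mat (jordan_block m a) (0\<^sub>m m ?s) (0\<^sub>m ?s m) ?R"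
    unfolding ma by (rule jordan_matrix_Cons)
  have ij: "i < m + ?s" "j < m + ?s" using Cons.prems(1,2) ma by auto
  have idx: "four_block_mat (jordan_block m a) (0\<^sub>m m ?s) (0\<^sub>m ?s m) ?R $$ (p,q) =
     (if p < m then if q < m then jordan_block m a $$ (p,q) else 0
      else if q < m then 0 else ?R $$ (p - m, q - m))" if "p < m + ?s" "q < m + ?s" for p q
    using that by (subst index_mat_four_block) (auto simp: dR)
  show ?case
  proof (cases "i < m")
    case True
    show ?thesis
    proof (cases "j < m")
      case True
      thus ?thesis using Cons.prems \<open>i < m\<close> ij unfolding eq idx[OF ij] by (auto simp: idx)
    next
      case False
      thus ?thesis using Cons.prems \<open>i < m\<close> ij unfolding eq idx[OF ij] by auto
    qed
  next
    case False
    show ?thesis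
    proof (cases "j < m")
      case True
      thus ?thesis using Cons.prems \<open>\<not> i < m\<close> ij unfolding eq idx[OF ij] by auto
    next
      case False
      have "i - m < ?s" "j - m < ?s" "i - m \<noteq> j - m" using ij \<open>\<not> i < m\<close> False Cons.prems(3) by auto
      moreover have "?R $$ (i - m, j - m) \<noteq> 0"
        using Cons.prems(4) \<open>\<not> i < m\<close> False ij unfolding eq idx[OF ij] by auto
      ultimately have "?R $$ (i - m, i - m) = ?R $$ (j - m, j - m)" using Cons.IH by blast
      thus ?thesis using \<open>\<not> i < m\<close> False ij unfolding eq by (simp add: idx)
    qed
  qed
qed

lemma mat_mult_sum: "A \<in> carrier_mat n n \<Longrightarrow> B \<in> carrier_mat n n \<Longrightarrow> i < n \<Longrightarrow> j < n \<Longrightarrow>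
  (A * B) $$ (i,j) = (\<Sum>k<n. A $$ (i,k) * B $$ (k,j))"
  by (simp add: scalar_prod_def atLeast0LessThan)

lemma jordan_fun:
  fixes D :: "nat \<Rightarrow> nat \<Rightarrow> complex"
  shows "\<exists>P Q J. (\<forall>i<n. \<forall>j<n. mm n P Q i j = (if i = j then 1 else 0)) \<and>
    (\<forall>i<n. \<forall>j<n. mm n Q P i j = (if i = j then 1 else 0)) \<and>
    (\<forall>i<n. \<forall>j<n. D i j = mm n P (mm n J Q) i j) \<and> uptri n J"
proof -
  define Dm where "Dm = mat n n (\<lambda>(i,j). D i j)"
  have Dc: "Dm \<in> carrier_mat n n" unfolding Dm_def by simp
  obtain as where "char_poly Dm = (\<Prod>a\<leftarrow>as. [:- a, 1:])" using char_poly_factorized[OF Dc] by blast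
  then obtain n_as where "jordan_nf Dm n_as" using jordan_nf_exists[OF Dc] by blast
  hence "similar_mat Dm (jordan_matrix n_as)" unfolding jordan_nf_def by simp
  then obtain Pm Qm where w: "similar_mat_wit Dm (jordan_matrix n_as) Pm Qm" unfolding similar_mat_def by blast
  define Jm where "Jm = jordan_matrix n_as"
  have dimD: "dim_row Dm = n" using Dc by simp
  have c: "Jm \<in> carrier_mat n n" "Pm \<in> carrier_mat n n" "Qm \<in> carrier_mat n n"
    and pq: "Pm * Qm = 1\<^sub>m n" and qp: "Qm * Pm = 1\<^sub>m n" and dj: "Dm = Pm * Jm * Qm"
    using w unfolding similar_mat_wit_def Let_def dimD Jm_def by auto
  have sn: "sum_list (map fst n_as) = n" using c(1) unfolding Jm_def carrier_mat_def by simp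
  define P where "P = (\<lambda>i j. Pm $$ (i,j))"
  define Q where "Q = (\<lambda>i j. Qm $$ (i,j))"
  define J where "J = (\<lambda>i j. Jm $$ (i,j))"
  have 1: "\<forall>i<n. \<forall>j<n. mm n P Q i j = (if i = j then 1 else 0)"
  proof (intro allI impI)
    fix i j assume "i < n" "j < n"
    hence "(Pm * Qm) $$ (i,j) = mm n P Q i j" unfolding mm_def P_def Q_def using mat_mult_sum[OF c(2) c(3)] by simp
    thus "mm n P Q i j = (if i = j then 1 else 0)" using pq \<open>i<n\<close> \<open>j<n\<close> by simp
  qed
  have 2: "\<forall>i<n. \<forall>j<n. mm n Q P i j = (if i = j then 1 else 0)"
  proof (intro allI impI)
    fix i j assume "i < n" "j < n"
    hence "(Qm * Pm) $$ (i,j) = mm n Q P i j" unfolding mm_def P_def Q_def using mat_mult_sum[OF c(3) c(2)] by simp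
    thus "mm n Q P i j = (if i = j then 1 else 0)" using qp \<open>i<n\<close> \<open>j<n\<close> by simp
  qed
  have 3: "\<forall>i<n. \<forall>j<n. D i j = mm n P (mm n J Q) i j"
  proof (intro allI impI)
    fix i j assume ij: "i < n" "j < n"
    have "Dm = Pm * (Jm * Qm)" using dj c by (simp add: assoc_mult_mat[of _ n n _ n _ n])
    hence "D i j = (Pm * (Jm * Qm)) $$ (i,j)" using ij unfolding Dm_def by (metis index_mat(1) case_prod_conv)
    also have "\<dots> = (\<Sum>k<n. Pm $$ (i,k) * (Jm * Qm) $$ (k,j))"
      using ij c by (intro mat_mult_sum) auto
    also have "\<dots> = mm n P (mm n J Q) i j" unfolding mm_def P_def J_def Q_def
      using ij mat_mult_sum[OF c(1) c(3)] by (intro sum.cong refl) simp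
    finally show "D i j = mm n P (mm n J Q) i j" .
  qed
  have 4: "uptri n J" unfolding uptri_def J_def Jm_def
    using jordan_matrix_upper_triangular[of _ n_as] jm_bp[of _ n_as] sn by auto
  show ?thesis using 1 2 3 4 by blast
qed

theorem spectral:
  fixes D :: "nat \<Rightarrow> nat \<Rightarrow> complex"
  assumes "isder n c D" "\<forall>E. isder n c E \<longrightarrow> tr n (mm n D E) = 0"
  shows "eqn n ((mv n D ^^ n) u) (\<lambda>k. 0)"
proof -
  obtain P Q J where "(\<forall>i<n. \<forall>j<n. mm n P Q i j = (if i = j then 1 else 0))"
    "(\<forall>i<n. \<forall>j<n. mm n Q P i j = (if i = j then 1 else 0))"
    "(\<forall>i<n. \<forall>j<n. D i j = mm n P (mm n J Q) i j)" "uptri n J"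
    using jordan_fun[of n D] by blast
  thus ?thesis using spectral_core assms by blast
qed




lemma sum_distinct_list: "distinct bs \<Longrightarrow> sum f (set bs) = (\<Sum>i<length bs. f (bs ! i))"
proof -
  assume d: "distinct bs"
  have "set bs = (\<lambda>i. bs ! i) ` {..<length bs}" by (auto simp: set_conv_nth)
  moreover have "inj_on (\<lambda>i. bs ! i) {..<length bs}" using d by (simp add: inj_on_nth)
  ultimately show ?thesis by (simp add: sum.reindex)
qed

lemma mm_diffl: "mm n (\<lambda>i k. A i k - A' i k) C = (\<lambda>i j. mm n A C i j - mm n A' C i j)"
  unfolding mm_def by (intro ext, simp add: algebra_simps sum_subtractf)
lemma mm_diffr: "mm n C (\<lambda>i k. A i k - A' i k) = (\<lambda>i j. mm n C A i j - mm n C A' i j)"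
  unfolding mm_def by (intro ext, simp add: algebra_simps sum_subtractf)
lemma mm_addl: "mm n (\<lambda>i k. A i k + A' i k) C = (\<lambda>i j. mm n A C i j + mm n A' C i j)"
  unfolding mm_def by (intro ext, simp add: algebra_simps sum.distrib)
lemma mm_addr: "mm n C (\<lambda>i k. A i k + A' i k) = (\<lambda>i j. mm n C A i j + mm n C A' i j)"
  unfolding mm_def by (intro ext, simp add: algebra_simps sum.distrib)
lemma mm_smultl: "mm n (\<lambda>i k. r * A i k) C = (\<lambda>i j. r * mm n A C i j)"
  unfolding mm_def by (intro ext, simp add: algebra_simps sum_distrib_left)
lemma mm_smultr: "mm n C (\<lambda>i k. r * A i k) = (\<lambda>i j. r * mm n C A i j)"
  unfolding mm_def by (intro ext, simp add: algebra_simps sum_distrib_left)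
lemma tr_diff: "tr n (\<lambda>i j. A i j - A' i j) = tr n A - tr n A'"
  unfolding tr_def by (simp add: sum_subtractf)
lemma tr_add: "tr n (\<lambda>i j. A i j + A' i j) = tr n A + tr n A'"
  unfolding tr_def by (simp add: sum.distrib)
lemma tr_smult: "tr n (\<lambda>i j. r * A i j) = r * tr n A"
  unfolding tr_def by (simp add: sum_distrib_left)
lemma tr_mm_sum: "tr n (mm n A (\<lambda>l k. \<Sum>r<m. f r * M r l k)) = (\<Sum>r<m. f r * tr n (mm n A (M r)))"
proof -
  have "tr n (mm n A (\<lambda>l k. \<Sum>r<m. f r * M r l k)) = (\<Sum>i<n. \<Sum>k<n. \<Sum>r<m. f r * (A i k * M r k i))"
    unfolding tr_def mm_def by (simp add: sum_distrib_left mult_ac)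
  also have "\<dots> = (\<Sum>i<n. \<Sum>r<m. \<Sum>k<n. f r * (A i k * M r k i))" by (rule sum.cong, simp, rule sum.swap)
  also have "\<dots> = (\<Sum>r<m. \<Sum>i<n. \<Sum>k<n. f r * (A i k * M r k i))" by (rule sum.swap)
  also have "\<dots> = (\<Sum>r<m. f r * tr n (mm n A (M r)))"
    unfolding tr_def mm_def by (simp add: sum_distrib_left)
  finally show ?thesis .
qed

locale LA =
  fixes B :: "'a::euclidean_space \<Rightarrow> 'a \<Rightarrow> 'a" and bs :: "'a list"
  assumes lie: "lie_algebra B" and dist: "distinct bs" and bas: "set bs = Basis"
begin

abbreviation nb where "nb \<equiv> length bs"

definition Dm :: "'a \<Rightarrow> nat \<Rightarrow> nat \<Rightarrow> complex" where
  "Dm x i k = (if i < nb \<and> k < nb then complex_of_real (B x (bs!k) \<bullet> bs!i) else 0)"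
definition cc :: "nat \<Rightarrow> nat \<Rightarrow> nat \<Rightarrow> complex" where
  "cc i j k = complex_of_real (B (bs!i) (bs!j) \<bullet> bs!k)"
definition cv :: "'a \<Rightarrow> nat \<Rightarrow> complex" where
  "cv x = (\<lambda>i. complex_of_real (x \<bullet> bs!i))"
definition kap :: "'a \<Rightarrow> 'a \<Rightarrow> complex" where
  "kap a b = tr nb (mm nb (Dm a) (Dm b))"

lemma bil: "bilinear B" using lie by (simp add: lie_algebra_def)
lemma lin1: "linear (B x)" using bil by (simp add: bilinear_def)
lemma lin2: "linear (\<lambda>x. B x y)" using bil by (simp add: bilinear_def)

lemma sum_bs: "sum f Basis = (\<Sum>i<nb. f (bs ! i))"
  using sum_distinct_list[OF dist, of f] bas by simp

lemma bs_in: "i < nb \<Longrightarrow> bs ! i \<in> Basis" using bas nth_mem by blast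

lemma orth: "i < nb \<Longrightarrow> j < nb \<Longrightarrow> bs!i \<bullet> bs!j = (if i = j then 1 else 0)"
proof -
  assume ij: "i < nb" "j < nb"
  have "bs!i = bs!j \<longleftrightarrow> i = j" using dist ij by (simp add: nth_eq_iff_index_eq)
  thus ?thesis using bs_in[OF ij(1)] bs_in[OF ij(2)] by (simp add: inner_Basis)
qed

lemma expand: "x = (\<Sum>i<nb. (x \<bullet> bs!i) *\<^sub>R bs!i)"
  using euclidean_representation[of x] sum_bs[of "\<lambda>b. (x \<bullet> b) *\<^sub>R b"] by simp

lemma lin_expand: "linear T \<Longrightarrow> T y \<bullet> bs!l = (\<Sum>k<nb. (y \<bullet> bs!k) * (T (bs!k) \<bullet> bs!l))"
proof -
  assume T: "linear T"
  have "T y = T (\<Sum>k<nb. (y \<bullet> bs!k) *\<^sub>R bs!k)" using expand by metis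
  also have "\<dots> = (\<Sum>k<nb. (y \<bullet> bs!k) *\<^sub>R T (bs!k))"
    by (simp add: linear_sum[OF T] linear_scale[OF T])
  finally show ?thesis by (simp add: inner_sum_left)
qed

lemma expand1: "B y z \<bullet> bs!l = (\<Sum>k<nb. (z \<bullet> bs!k) * (B y (bs!k) \<bullet> bs!l))"
  by (rule lin_expand[OF lin1])
lemma expand2: "B y z \<bullet> bs!l = (\<Sum>k<nb. (y \<bullet> bs!k) * (B (bs!k) z \<bullet> bs!l))"
  using lin_expand[OF lin2[of z], of y l] by simp

lemma eq_zero: "(\<forall>i<nb. x \<bullet> bs!i = 0) \<Longrightarrow> x = 0"
  using expand[of x] by simp

lemma inner_expand: "x \<bullet> y = (\<Sum>k<nb. (x \<bullet> bs!k) * (y \<bullet> bs!k))"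
proof -
  have e: "(\<Sum>k<nb. (x \<bullet> bs!k) *\<^sub>R bs!k) = x" using expand[of x] by simp
  have "x \<bullet> y = (\<Sum>k<nb. (x \<bullet> bs!k) *\<^sub>R bs!k) \<bullet> y" by (simp only: e)
  also have "\<dots> = (\<Sum>k<nb. (x \<bullet> bs!k) * (bs!k \<bullet> y))" by (simp add: inner_sum_left)
  finally show ?thesis by (simp add: inner_commute)
qed

lemma Dm_bracket: "Dm (B x y) = (\<lambda>i k. mm nb (Dm x) (Dm y) i k - mm nb (Dm y) (Dm x) i k)"
proof (intro ext)
  fix i k
  show "Dm (B x y) i k = mm nb (Dm x) (Dm y) i k - mm nb (Dm y) (Dm x) i k"
  proof (cases "i < nb \<and> k < nb")
    case True
    have j: "B (B x y) (bs!k) = B x (B y (bs!k)) - B y (B x (bs!k))"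
      using lie_jac[OF lie, of x y "bs!k"] by simp
    have e1: "B x (B y (bs!k)) \<bullet> bs!i = (\<Sum>m<nb. (B x (bs!m) \<bullet> bs!i) * (B y (bs!k) \<bullet> bs!m))"
      using lin_expand[OF lin1, of x "B y (bs!k)" i] by (simp add: mult.commute)
    have e2: "B y (B x (bs!k)) \<bullet> bs!i = (\<Sum>m<nb. (B y (bs!m) \<bullet> bs!i) * (B x (bs!k) \<bullet> bs!m))"
      using lin_expand[OF lin1, of y "B x (bs!k)" i] by (simp add: mult.commute)
    have "mm nb (Dm x) (Dm y) i k = complex_of_real (B x (B y (bs!k)) \<bullet> bs!i)"
      unfolding mm_def e1 using True by (simp add: Dm_def)
    moreover have "mm nb (Dm y) (Dm x) i k = complex_of_real (B y (B x (bs!k)) \<bullet> bs!i)"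
      unfolding mm_def e2 using True by (simp add: Dm_def)
    ultimately show ?thesis using True unfolding Dm_def j by (simp add: inner_diff_left)
  next
    case False
    thus ?thesis unfolding mm_def Dm_def by auto
  qed
qed

lemma Dm_add: "Dm (x + y) i k = Dm x i k + Dm y i k"
  unfolding Dm_def by (simp add: linear_add[OF lin2] inner_add_left)
lemma Dm_scale: "Dm (r *\<^sub>R x) i k = complex_of_real r * Dm x i k"
  unfolding Dm_def by (simp add: linear_scale[OF lin2])
lemma Dm_zero: "Dm 0 i k = 0"
  unfolding Dm_def by (simp add: linear_0[OF lin2])

lemma Dm_coord: "i < nb \<Longrightarrow> k < nb \<Longrightarrow> Dm x i k = (\<Sum>m<nb. cv x m * cc m k i)"
proof -
  assume ik: "i < nb" "k < nb"
  have "Dm x i k = complex_of_real (\<Sum>m<nb. (x \<bullet> bs!m) * (B (bs!m) (bs!k) \<bullet> bs!i))"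
    unfolding Dm_def using ik expand2[of x "bs!k" i] by simp
  thus ?thesis unfolding cv_def cc_def by simp
qed

lemma Dm_basis: "i < nb \<Longrightarrow> k < nb \<Longrightarrow> m < nb \<Longrightarrow> Dm (bs!m) i k = cc m k i"
  unfolding Dm_def cc_def by simp

lemma isder_Dm: "isder nb cc (Dm x)"
  unfolding isder_def
proof (intro allI impI)
  fix i j l assume ijl: "i < nb" "j < nb" "l < nb"
  have jac: "B x (B (bs!i) (bs!j)) = B (B x (bs!i)) (bs!j) + B (bs!i) (B x (bs!j))"
    by (rule lie_jac[OF lie])
  have 1: "(\<Sum>k<nb. cc i j k * Dm x l k) = complex_of_real (B x (B (bs!i) (bs!j)) \<bullet> bs!l)"
    using lin_expand[OF lin1, of x "B (bs!i) (bs!j)" l] ijl by (simp add: cc_def Dm_def)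
  have 2: "(\<Sum>m<nb. Dm x m i * cc m j l) = complex_of_real (B (B x (bs!i)) (bs!j) \<bullet> bs!l)"
    using expand2[of "B x (bs!i)" "bs!j" l] ijl by (simp add: cc_def Dm_def)
  have 3: "(\<Sum>m<nb. Dm x m j * cc i m l) = complex_of_real (B (bs!i) (B x (bs!j)) \<bullet> bs!l)"
    using lin_expand[OF lin1, of "bs!i" "B x (bs!j)" l] ijl by (simp add: cc_def Dm_def)
  show "(\<Sum>k<nb. cc i j k * Dm x l k) = (\<Sum>m<nb. Dm x m i * cc m j l) + (\<Sum>m<nb. Dm x m j * cc i m l)"
    unfolding 1 2 3 jac by (simp add: inner_add_left)
qed

lemma mv_Dm: "eqn nb (mv nb (Dm x) (cv v)) (cv (B x v))"
  unfolding eqn_def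
proof (intro allI impI)
  fix i assume i: "i < nb"
  show "mv nb (Dm x) (cv v) i = cv (B x v) i"
    unfolding mv_def cv_def using lin_expand[OF lin1, of x v i] i by (simp add: Dm_def mult.commute)
qed

lemma mv_Dm_pow: "eqn nb ((mv nb (Dm x) ^^ m) (cv v)) (cv ((B x ^^ m) v))"
proof (induction m)
  case 0 thus ?case by simp
next
  case (Suc m)
  have "(mv nb (Dm x) ^^ Suc m) (cv v) = mv nb (Dm x) (cv ((B x ^^ m) v))"
    using mv_cong[OF Suc.IH] by simp
  thus ?case using mv_Dm by simp
qed

lemma Dm_add': "Dm (x + y) = (\<lambda>i k. Dm x i k + Dm y i k)" by (intro ext) (rule Dm_add)
lemma Dm_scale': "Dm (r *\<^sub>R x) = (\<lambda>i k. complex_of_real r * Dm x i k)" by (intro ext) (rule Dm_scale)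

lemma kap_addl: "kap (x + y) b = kap x b + kap y b"
  unfolding kap_def Dm_add' by (simp add: mm_addl tr_add)
lemma kap_scalel: "kap (r *\<^sub>R x) b = complex_of_real r * kap x b"
  unfolding kap_def Dm_scale' by (simp add: mm_smultl tr_smult)
lemma kap_addr: "kap a (x + y) = kap a x + kap a y"
  unfolding kap_def Dm_add' by (simp add: mm_addr tr_add)
lemma kap_scaler: "kap a (r *\<^sub>R x) = complex_of_real r * kap a x"
  unfolding kap_def Dm_scale' by (simp add: mm_smultr tr_smult)

lemma tr_mm3: "tr n (mm n (mm n X Y) Z) = tr n (mm n Y (mm n Z X))"
proof -
  have "tr n (mm n (mm n X Y) Z) = tr n (mm n X (mm n Y Z))" by (simp add: mm_assoc)
  also have "\<dots> = tr n (mm n (mm n Y Z) X)" by (rule tr_mm_comm)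
  finally show ?thesis by (simp add: mm_assoc)
qed

lemma kap_bracket: "kap (B y a) b = kap a (B b y)"
proof -
  have "kap (B y a) b = tr nb (mm nb (mm nb (Dm y) (Dm a)) (Dm b)) - tr nb (mm nb (mm nb (Dm a) (Dm y)) (Dm b))"
    unfolding kap_def Dm_bracket by (simp add: mm_diffl tr_diff)
  also have "tr nb (mm nb (mm nb (Dm y) (Dm a)) (Dm b)) = tr nb (mm nb (Dm a) (mm nb (Dm b) (Dm y)))"
    by (rule tr_mm3)
  also have "tr nb (mm nb (mm nb (Dm a) (Dm y)) (Dm b)) = tr nb (mm nb (Dm a) (mm nb (Dm y) (Dm b)))"
    by (simp add: mm_assoc)
  also have "tr nb (mm nb (Dm a) (mm nb (Dm b) (Dm y))) - tr nb (mm nb (Dm a) (mm nb (Dm y) (Dm b))) = kap a (B b y)"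
    unfolding kap_def Dm_bracket by (simp add: mm_diffr tr_diff)
  finally show ?thesis .
qed

lemma comm_der:
  assumes E: "isder nb cc E" and lk: "l < nb" "k < nb"
  shows "mm nb E (Dm b) l k - mm nb (Dm b) E l k = (\<Sum>r<nb. mv nb E (cv b) r * cc r k l)"
proof -
  have "mm nb E (Dm b) l k = (\<Sum>q<nb. E l q * (\<Sum>m<nb. cv b m * cc m k q))"
    unfolding mm_def using lk Dm_coord by (intro sum.cong) auto
  also have "\<dots> = (\<Sum>m<nb. cv b m * (\<Sum>q<nb. cc m k q * E l q))"
    by (simp add: sum_distrib_left mult_ac, rule sum.swap)
  also have "\<dots> = (\<Sum>m<nb. cv b m * ((\<Sum>r<nb. E r m * cc r k l) + (\<Sum>r<nb. E r k * cc m r l)))"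
    using E lk unfolding isder_def by (intro sum.cong) auto
  also have "\<dots> = (\<Sum>m<nb. \<Sum>r<nb. cv b m * E r m * cc r k l) + (\<Sum>m<nb. \<Sum>r<nb. cv b m * E r k * cc m r l)"
    by (simp add: distrib_left sum.distrib sum_distrib_left mult_ac)
  finally have 1: "mm nb E (Dm b) l k = (\<Sum>m<nb. \<Sum>r<nb. cv b m * E r m * cc r k l) + (\<Sum>m<nb. \<Sum>r<nb. cv b m * E r k * cc m r l)" .
  have "mm nb (Dm b) E l k = (\<Sum>r<nb. (\<Sum>m<nb. cv b m * cc m r l) * E r k)"
    unfolding mm_def using lk Dm_coord by (intro sum.cong) auto
  also have "\<dots> = (\<Sum>r<nb. \<Sum>m<nb. cv b m * cc m r l * E r k)" by (simp add: sum_distrib_right)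
  also have "\<dots> = (\<Sum>m<nb. \<Sum>r<nb. cv b m * cc m r l * E r k)" by (rule sum.swap)
  also have "\<dots> = (\<Sum>m<nb. \<Sum>r<nb. cv b m * E r k * cc m r l)" by (simp add: mult_ac)
  finally have 2: "mm nb (Dm b) E l k = (\<Sum>m<nb. \<Sum>r<nb. cv b m * E r k * cc m r l)" .
  have 3: "(\<Sum>r<nb. mv nb E (cv b) r * cc r k l) = (\<Sum>m<nb. \<Sum>r<nb. cv b m * E r m * cc r k l)"
  proof -
    have "(\<Sum>r<nb. mv nb E (cv b) r * cc r k l) = (\<Sum>r<nb. \<Sum>m<nb. E r m * cv b m * cc r k l)"
      unfolding mv_def by (simp add: sum_distrib_right)
    also have "\<dots> = (\<Sum>m<nb. \<Sum>r<nb. E r m * cv b m * cc r k l)" by (rule sum.swap)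
    finally show ?thesis by (simp add: mult_ac)
  qed
  show ?thesis using 1 2 3 by simp
qed

lemma trace_lemma:
  assumes a: "\<forall>b. kap a b = 0" and E: "isder nb cc E"
  shows "tr nb (mm nb (Dm (B a b)) E) = 0"
proof -
  define w where "w = mv nb E (cv b)"
  have "tr nb (mm nb (Dm (B a b)) E) = tr nb (mm nb (mm nb (Dm a) (Dm b)) E) - tr nb (mm nb (mm nb (Dm b) (Dm a)) E)"
    unfolding Dm_bracket by (simp add: mm_diffl tr_diff)
  also have "tr nb (mm nb (mm nb (Dm a) (Dm b)) E) = tr nb (mm nb (Dm a) (mm nb (Dm b) E))" by (simp add: mm_assoc)
  also have "tr nb (mm nb (mm nb (Dm b) (Dm a)) E) = tr nb (mm nb (Dm a) (mm nb E (Dm b)))" by (rule tr_mm3)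
  also have "tr nb (mm nb (Dm a) (mm nb (Dm b) E)) - tr nb (mm nb (Dm a) (mm nb E (Dm b))) =
      tr nb (mm nb (Dm a) (\<lambda>l k. mm nb (Dm b) E l k - mm nb E (Dm b) l k))"
    by (simp add: mm_diffr tr_diff)
  also have "\<dots> = tr nb (mm nb (Dm a) (\<lambda>l k. (-1) * (\<Sum>r<nb. w r * Dm (bs!r) l k)))"
  proof (rule tr_cong_r, intro allI impI)
    fix l k assume lk: "l < nb" "k < nb"
    have h1: "(\<Sum>r<nb. w r * Dm (bs!r) l k) = (\<Sum>r<nb. w r * cc r k l)"
      using lk Dm_basis by (intro sum.cong) auto
    have h2: "mm nb E (Dm b) l k - mm nb (Dm b) E l k = (\<Sum>r<nb. w r * cc r k l)"
      using comm_der[OF E lk, of b] unfolding w_def by simp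
    have "mm nb (Dm b) E l k - mm nb E (Dm b) l k = - (\<Sum>r<nb. w r * cc r k l)"
      using h2 by (metis minus_diff_eq)
    thus "mm nb (Dm b) E l k - mm nb E (Dm b) l k = (-1) * (\<Sum>r<nb. w r * Dm (bs!r) l k)"
      using h1 by simp
  qed
  also have "\<dots> = (-1) * tr nb (mm nb (Dm a) (\<lambda>l k. \<Sum>r<nb. w r * Dm (bs!r) l k))"
    by (simp only: mm_smultr tr_smult)
  also have "tr nb (mm nb (Dm a) (\<lambda>l k. \<Sum>r<nb. w r * Dm (bs!r) l k)) = (\<Sum>r<nb. w r * kap a (bs!r))"
    unfolding kap_def by (rule tr_mm_sum)
  finally show ?thesis using a by simp
qed

lemma kap_zerol: "kap 0 b = 0" using kap_scalel[of 0 0 b] by simp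
lemma kap_neg: "kap (- x) b = - kap x b" using kap_scalel[of "-1" x b] by simp

lemma kap_sumr: "finite K \<Longrightarrow> kap a (\<Sum>k\<in>K. f k) = (\<Sum>k\<in>K. kap a (f k))"
proof (induction K rule: finite_induct)
  case empty thus ?case using kap_scaler[of a 0 0] by simp
next
  case (insert x F) thus ?case by (simp add: kap_addr)
qed

definition sset where "sset = {a. \<forall>b. kap a b = 0}"
definition PP where "PP = span {B a b | a b. a \<in> sset}"

lemma sset_subspace: "Real_Vector_Spaces.subspace sset"
  unfolding real_vector.subspace_def sset_def by (auto simp: kap_addl kap_scalel kap_zerol)

lemma sset_ideal: "a \<in> sset \<Longrightarrow> B y a \<in> sset"
  unfolding sset_def by (simp add: kap_bracket)

lemma PP_ideal: "x \<in> PP \<Longrightarrow> B y x \<in> PP"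
proof -
  assume x: "x \<in> PP"
  have "B y ` {B a b | a b. a \<in> sset} \<subseteq> PP"
  proof
    fix z assume "z \<in> B y ` {B a b | a b. a \<in> sset}"
    then obtain a b where ab: "a \<in> sset" "z = B y (B a b)" by blast
    have "z = B (B y a) b + B a (B y b)" using ab(2) lie_jac[OF lie, of y a b] by simp
    moreover have "B (B y a) b \<in> {B a b | a b. a \<in> sset}" "B a (B y b) \<in> {B a b | a b. a \<in> sset}"
      using sset_ideal[OF ab(1)] ab(1) by blast+
    hence "B (B y a) b \<in> PP" "B a (B y b) \<in> PP"
      unfolding PP_def by (auto intro: span_superset[THEN subsetD])
    ultimately show "z \<in> PP" unfolding PP_def by (simp add: span_add)
  qed
  hence "span (B y ` {B a b | a b. a \<in> sset}) \<subseteq> PP" unfolding PP_def by (simp add: span_minimal)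
  hence "B y ` PP \<subseteq> PP" unfolding PP_def span_linear_image[OF lin1] by simp
  thus ?thesis using x by blast
qed

lemma PP_trace: "x \<in> PP \<Longrightarrow> isder nb cc E \<Longrightarrow> tr nb (mm nb (Dm x) E) = 0"
proof -
  assume x: "x \<in> PP" and E: "isder nb cc E"
  show ?thesis
  proof (rule span_induct[OF x[unfolded PP_def], where P = "\<lambda>x. tr nb (mm nb (Dm x) E) = 0"])
    have add: "tr nb (mm nb (Dm (p + q)) E) = tr nb (mm nb (Dm p) E) + tr nb (mm nb (Dm q) E)" for p q
      unfolding Dm_add' mm_addl tr_add ..
    have sc: "tr nb (mm nb (Dm (r *\<^sub>R p)) E) = complex_of_real r * tr nb (mm nb (Dm p) E)" for r p
      unfolding Dm_scale' mm_smultl tr_smult ..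
    have z: "tr nb (mm nb (Dm 0) E) = 0" using sc[of 0 0] by simp
    show "Real_Vector_Spaces.subspace {x. tr nb (mm nb (Dm x) E) = 0}"
      unfolding real_vector.subspace_def by (auto simp: add sc z)
  next
    fix z assume "z \<in> {B a b | a b. a \<in> sset}"
    then obtain a b where "a \<in> sset" "z = B a b" by blast
    thus "tr nb (mm nb (Dm z) E) = 0" using trace_lemma[OF _ E] unfolding sset_def by blast
  qed
qed

lemma PP_nil: "x \<in> PP \<Longrightarrow> (B x ^^ nb) v = 0"
proof -
  assume x: "x \<in> PP"
  have "eqn nb ((mv nb (Dm x) ^^ nb) (cv v)) (\<lambda>k. 0)"
    by (rule spectral[OF isder_Dm]) (use PP_trace[OF x] in blast)
  hence "eqn nb (cv ((B x ^^ nb) v)) (\<lambda>k. 0)" using mv_Dm_pow[where x=x and m=nb and v=v] by (simp add: eqn_def)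
  hence "\<forall>i<nb. (B x ^^ nb) v \<bullet> bs!i = 0" unfolding eqn_def cv_def by simp
  thus ?thesis by (rule eq_zero)
qed

lemma abelian_solvable:
  assumes "lie_ideal B I" "\<forall>x\<in>I. \<forall>y\<in>I. B x y = 0"
  shows "solvable_ideal B I"
proof -
  have "0 \<in> I" using assms(1) unfolding lie_ideal_def by (simp add: subspace_0)
  hence "{B x y | x y. x \<in> I \<and> y \<in> I} = {0}" using assms(2) by force
  hence "derived_series B I (Suc 0) = {0}" by simp
  thus ?thesis unfolding solvable_ideal_def using assms(1) by blast
qed

lemma PP_zero:
  assumes ss: "\<forall>I. solvable_ideal B I \<longrightarrow> I = {0}"
  shows "PP \<subseteq> {0}"
proof (rule ccontr)
  assume ne: "\<not> PP \<subseteq> {0}"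
  have sP: "Real_Vector_Spaces.subspace PP" unfolding PP_def by simp
  have br: "B x y \<in> PP" if "y \<in> PP" for x y using PP_ideal that by blast
  have subP: "subalg B PP" unfolding subalg_def using sP br by blast
  have "\<exists>v\<in>PP. v \<notin> {0} \<and> (\<forall>x\<in>PP. B x v \<in> {0})"
  proof (rule engel_gen[OF lie subP])
    show "\<forall>x\<in>PP. \<exists>k. \<forall>u. (B x ^^ k) u = 0" using PP_nil by blast
    show "Real_Vector_Spaces.subspace PP" by (rule sP)
    show "Real_Vector_Spaces.subspace {0::'a}" using subspace_span[of "{}::'a set"] span_empty by simp
    show "{0} \<subset> PP" using ne sP subspace_0 by blast
    show "\<forall>x\<in>PP. \<forall>u\<in>PP. B x u \<in> PP" using br by blast
    show "\<forall>x\<in>PP. \<forall>w\<in>{0}. B x w \<in> {0}" using linear_0[OF lin1] by simp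
  qed
  then obtain v where v: "v \<in> PP" "v \<noteq> 0" "\<forall>x\<in>PP. B x v = 0" by blast
  define C where "C = {v\<in>PP. \<forall>x\<in>PP. B x v = 0}"
  have sC: "Real_Vector_Spaces.subspace C" unfolding C_def real_vector.subspace_def using sP
    by (auto simp: subspace_0 subspace_add subspace_scale linear_add[OF lin1] linear_scale[OF lin1] linear_0[OF lin1])
  have iC: "B y c \<in> C" if c: "c \<in> C" for y c
  proof -
    have cP: "c \<in> PP" "\<forall>x\<in>PP. B x c = 0" using c unfolding C_def by auto
    have "B x (B y c) = 0" if "x \<in> PP" for x
    proof -
      have "B y x \<in> PP" using br that by blast
      hence "B x y \<in> PP" using lie_anti[OF lie, of x y] sP by (simp add: subspace_neg)
      hence "B (B x y) c = 0" using cP by blast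
      moreover have "B x c = 0" using cP that by blast
      ultimately show ?thesis using lie_jac[OF lie, of x y c] linear_0[OF lin1] by simp
    qed
    thus ?thesis unfolding C_def using br cP(1) by blast
  qed
  have "solvable_ideal B C"
  proof (rule abelian_solvable)
    show "lie_ideal B C" unfolding lie_ideal_def using sC iC by blast
    show "\<forall>x\<in>C. \<forall>y\<in>C. B x y = 0" unfolding C_def by blast
  qed
  hence "C = {0}" using ss by blast
  moreover have "v \<in> C" unfolding C_def using v by blast
  ultimately show False using v(2) by blast
qed

lemma sset_zero:
  assumes ss: "\<forall>I. solvable_ideal B I \<longrightarrow> I = {0}"
  shows "sset = {0}"
proof -
  have z: "B a b = 0" if "a \<in> sset" for a b
  proof -
    have "B a b \<in> {B a b | a b. a \<in> sset}" using that by blast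
    hence "B a b \<in> PP" unfolding PP_def by (rule span_superset[THEN subsetD])
    thus ?thesis using PP_zero[OF ss] by blast
  qed
  have "solvable_ideal B sset"
  proof (rule abelian_solvable)
    show "lie_ideal B sset" unfolding lie_ideal_def using sset_subspace sset_ideal by blast
    show "\<forall>x\<in>sset. \<forall>y\<in>sset. B x y = 0" using z by blast
  qed
  thus ?thesis using ss by blast
qed

definition chi where "chi y = tr nb (Dm y)"

lemma chi_bracket: "chi (B y b) = 0"
  unfolding chi_def Dm_bracket tr_diff using tr_mm_comm[of nb "Dm y" "Dm b"] by simp
lemma chi_add: "chi (x + y) = chi x + chi y" unfolding chi_def Dm_add' tr_add ..
lemma chi_scale: "chi (r *\<^sub>R x) = complex_of_real r * chi x" unfolding chi_def Dm_scale' tr_smult ..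
lemma chi_zero0: "chi 0 = 0" using chi_scale[of 0 0] by simp
lemma chi_sum: "finite K \<Longrightarrow> chi (\<Sum>k\<in>K. f k) = (\<Sum>k\<in>K. chi (f k))"
proof (induction K rule: finite_induct)
  case empty thus ?case by (simp add: chi_zero0)
next
  case (insert x F) thus ?case by (simp add: chi_add)
qed

lemma Dm_re: "complex_of_real (Re (Dm x i k)) = Dm x i k" unfolding Dm_def by simp

lemma kap_real: "complex_of_real (Re (kap a b)) = kap a b"
proof -
  have "kap a b = complex_of_real (\<Sum>i<nb. \<Sum>k<nb. Re (Dm a i k) * Re (Dm b k i))"
    unfolding kap_def tr_def mm_def by (simp add: Dm_re)
  thus ?thesis by simp
qed

lemma chi_real: "chi y = complex_of_real (\<Sum>b\<in>Basis. B y b \<bullet> b)"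
proof -
  have "chi y = (\<Sum>i<nb. complex_of_real (B y (bs!i) \<bullet> bs!i))"
    unfolding chi_def tr_def Dm_def by (rule sum.cong) auto
  also have "\<dots> = complex_of_real (\<Sum>b\<in>Basis. B y b \<bullet> b)" by (simp add: sum_bs)
  finally show ?thesis .
qed

lemma coef: "j < nb \<Longrightarrow> (\<Sum>k<nb. f k *\<^sub>R bs!k) \<bullet> bs!j = f j"
proof -
  assume j: "j < nb"
  have "(\<Sum>k<nb. f k *\<^sub>R bs!k) \<bullet> bs!j = (\<Sum>k<nb. if k = j then f k else 0)"
    unfolding inner_sum_left using j orth by (intro sum.cong) auto
  thus ?thesis using j by simp
qed

lemma kap_expand: "kap a b = (\<Sum>k<nb. complex_of_real (b \<bullet> bs!k) * kap a (bs!k))"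
proof -
  have "kap a b = kap a (\<Sum>k<nb. (b \<bullet> bs!k) *\<^sub>R bs!k)" using expand[of b] by simp
  also have "\<dots> = (\<Sum>k<nb. complex_of_real (b \<bullet> bs!k) * kap a (bs!k))" by (simp add: kap_sumr kap_scaler)
  finally show ?thesis .
qed

lemma chi_expand: "chi b = (\<Sum>k<nb. complex_of_real (b \<bullet> bs!k) * chi (bs!k))"
proof -
  have "chi b = chi (\<Sum>k<nb. (b \<bullet> bs!k) *\<^sub>R bs!k)" using expand[of b] by simp
  also have "\<dots> = (\<Sum>k<nb. complex_of_real (b \<bullet> bs!k) * chi (bs!k))" by (simp add: chi_sum chi_scale)
  finally show ?thesis .
qed

lemma chi_vanish:
  assumes ss: "\<forall>I. solvable_ideal B I \<longrightarrow> I = {0}"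
  shows "chi y = 0"
proof -
  have s0: "sset = {0}" by (rule sset_zero[OF ss])
  define Km where "Km a = (\<Sum>k<nb. Re (kap a (bs!k)) *\<^sub>R bs!k)" for a
  have linK: "linear Km"
  proof (rule linearI)
    fix a b show "Km (a + b) = Km a + Km b" unfolding Km_def by (simp add: kap_addl scaleR_add_left sum.distrib)
  next
    fix r a show "Km (r *\<^sub>R a) = r *\<^sub>R Km a" unfolding Km_def by (simp add: kap_scalel scaleR_sum_right)
  qed
  have injK: "inj Km" unfolding linear_injective_0[OF linK]
  proof (intro allI impI)
    fix a assume "Km a = 0"
    hence "Re (kap a (bs!j)) = 0" if "j < nb" for j using coef[OF that, of "\<lambda>k. Re (kap a (bs!k))"]
      unfolding Km_def by simp
    hence "kap a (bs!j) = 0" if "j < nb" for j using kap_real[of a "bs!j"] that by simp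
    hence "kap a b = 0" for b using kap_expand[of a b] by simp
    hence "a \<in> sset" unfolding sset_def by simp
    thus "a = 0" using s0 by simp
  qed
  have "surj Km" by (rule eucl.linear_injective_imp_surjective[OF linK injK]) simp
  then obtain Z where Z: "Km Z = (\<Sum>k<nb. Re (chi (bs!k)) *\<^sub>R bs!k)" by (metis surjD)
  have kc: "kap Z (bs!j) = chi (bs!j)" if j: "j < nb" for j
  proof -
    have "Re (kap Z (bs!j)) = Re (chi (bs!j))"
      using arg_cong[OF Z, of "\<lambda>v. v \<bullet> bs!j"] coef[OF j] unfolding Km_def by simp
    moreover have "chi (bs!j) = complex_of_real (Re (chi (bs!j)))" unfolding chi_real by simp
    ultimately show ?thesis using kap_real[of Z "bs!j"] by metis
  qed
  have kZ: "kap Z b = chi b" for b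
    unfolding kap_expand[of Z b] chi_expand[of b] using kc by (intro sum.cong) auto
  have cent: "B Z y = 0" for y
  proof -
    have "kap (B Z y) b = 0" for b
    proof -
      have "B Z y = - B y Z" by (rule lie_anti[OF lie])
      hence "kap (B Z y) b = - kap (B y Z) b" by (simp add: kap_neg)
      also have "\<dots> = - chi (B b y)" by (simp add: kap_bracket kZ)
      finally show ?thesis by (simp add: chi_bracket)
    qed
    hence "B Z y \<in> sset" unfolding sset_def by simp
    thus ?thesis using s0 by simp
  qed
  have BZZ: "B Z Z = 0" using lie by (simp add: lie_algebra_def)
  have "solvable_ideal B (span {Z})"
  proof (rule abelian_solvable)
    show "lie_ideal B (span {Z})" unfolding lie_ideal_def
    proof (intro conjI allI impI)
      show "Real_Vector_Spaces.subspace (span {Z})" by simp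
      fix x w assume "w \<in> span {Z}"
      then obtain t where "w = t *\<^sub>R Z" unfolding span_singleton by blast
      hence "B x w = t *\<^sub>R B x Z" by (simp add: linear_scale[OF lin1])
      also have "B x Z = - B Z x" by (rule lie_anti[OF lie])
      finally have "B x w = 0" using cent by simp
      thus "B x w \<in> span {Z}" by (simp add: span_0)
    qed
    show "\<forall>x\<in>span {Z}. \<forall>w\<in>span {Z}. B x w = 0"
    proof (intro ballI)
      fix x w assume "x \<in> span {Z}" "w \<in> span {Z}"
      then obtain s t where "x = s *\<^sub>R Z" "w = t *\<^sub>R Z" unfolding span_singleton by blast
      thus "B x w = 0" using BZZ by (simp add: linear_scale[OF lin1] linear_scale[OF lin2])
    qed
  qed
  hence "span {Z} = {0}" using ss by blast
  hence "Z = 0" using span_superset[of "{Z}"] by blast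
  hence "chi y = kap 0 y" using kZ by simp
  thus ?thesis by (simp add: kap_zerol)
qed

end

lemma semisimple_unimodular:
  fixes B :: "'a::euclidean_space \<Rightarrow> 'a \<Rightarrow> 'a"
  assumes "semisimple B"
  shows "(\<Sum>b\<in>Basis. B y b \<bullet> b) = 0"
proof -
  obtain bs :: "'a list" where bs: "distinct bs" "set bs = Basis"
    using finite_distinct_list[OF finite_Basis] by metis
  have lie: "lie_algebra B" and ss: "\<forall>I. solvable_ideal B I \<longrightarrow> I = {0}"
    using assms unfolding semisimple_def by auto
  interpret LA B bs using lie bs by unfold_locales
  have "chi y = 0" by (rule chi_vanish[OF ss])
  thus ?thesis unfolding chi_real by (simp only: of_real_eq_0_iff)
qed




lemma idx8_inj: "inj_on idx8 {1..8}"
proof (rule inj_onI)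
  fix a b assume ab: "a \<in> {1..8::nat}" "b \<in> {1..8::nat}" "idx8 a = idx8 b"
  have "(of_nat (a - 1) :: 8) = of_nat (b - 1)" using ab(3) unfolding idx8_def .
  moreover have ok: "(of_nat k :: 8) = Abs_bit0 (int k)" if "k < 8" for k
    using that by (simp add: bit0.of_nat_eq)
  moreover have "a - 1 < 8" "b - 1 < 8" using ab(1,2) by auto
  ultimately have "Abs_bit0 (int (a - 1)) = (Abs_bit0 (int (b - 1)) :: 8)" by metis
  moreover have "inj_on (Abs_bit0 :: int \<Rightarrow> 8) {0..<8}" using inj_on_Abs_bit0[where 'a=4] by simp
  ultimately have "int (a - 1) = int (b - 1)" using ab(1,2) unfolding inj_on_def by auto
  thus "a = b" using ab(1,2) by auto
qed

lemma idx8_bij: "idx8 ` {1..8} = UNIV"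
proof -
  have "card (idx8 ` {1..8}) = 8" using card_image[OF idx8_inj] by simp
  also have "\<dots> = card (UNIV :: 8 set)" by simp
  finally show ?thesis by (simp add: card_subset_eq)
qed

lemma idx8_eq: "i \<in> {1..8} \<Longrightarrow> j \<in> {1..8} \<Longrightarrow> idx8 i = idx8 j \<longleftrightarrow> i = j"
  using idx8_inj unfolding inj_on_def by blast

lemma Basis_cart: "(Basis :: (real^'n) set) = range (\<lambda>i. axis i 1)"
  by (auto simp: Basis_vec_def)
lemma sum_Basis_cart: "(\<Sum>e\<in>(Basis :: (real^'n) set). F e) = (\<Sum>i\<in>UNIV. F (axis i 1))"
  unfolding Basis_cart by (simp add: sum.reindex inj_on_def axis_eq_axis)

lemma tr_sc: "(\<Sum>e\<in>Basis. sc_bracket l (axis (idx8 8) 1) e \<bullet> e) = (\<Sum>k\<in>{1..8}. sc_full l 8 k k)"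
proof -
  let ?x = "axis (idx8 8) 1 :: real^8"
  have "(\<Sum>e\<in>Basis. sc_bracket l ?x e \<bullet> e) = (\<Sum>m\<in>UNIV. sc_bracket l ?x (axis m 1) $ m)"
    by (simp add: sum_Basis_cart inner_axis)
  also have "\<dots> = (\<Sum>k'\<in>{1..8}. sc_bracket l ?x (axis (idx8 k') 1) $ idx8 k')"
    by (subst idx8_bij[symmetric], subst sum.reindex[OF idx8_inj]) simp
  also have "\<dots> = (\<Sum>k'\<in>{1..8}. sc_full l 8 k' k')"
  proof (rule sum.cong, simp)
    fix k' assume k': "k' \<in> {1..8::nat}"
    have "sc_bracket l ?x (axis (idx8 k') 1) $ idx8 k' =
        (\<Sum>i\<in>{1..8}. \<Sum>j\<in>{1..8}. \<Sum>k\<in>{1..8}. if k = k' \<and> i = 8 \<and> j = k' then sc_full l i j k else 0)"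
      unfolding sc_bracket_def vec_lambda_beta using k' by (intro sum.cong refl) (auto simp: axis_def idx8_eq)
    also have "\<dots> = sc_full l 8 k' k'"
    proof -
      have a: "(\<Sum>k\<in>{1..8}. if k = k' \<and> i = 8 \<and> j = k' then sc_full l i j k else 0) =
          (if i = 8 \<and> j = k' then sc_full l i j k' else 0)" for i j
      proof (cases "i = 8 \<and> j = k'")
        case True thus ?thesis using k' by (simp add: sum.delta)
      next
        case False thus ?thesis by (auto intro!: sum.neutral)
      qed
      have b: "(\<Sum>j\<in>{1..8}. if i = 8 \<and> j = k' then sc_full l i j k' else 0) =
          (if i = 8 then sc_full l i k' k' else 0)" for i
      proof (cases "i = 8")
        case True thus ?thesis using k' by (simp add: sum.delta)
      next
        case False thus ?thesis by (auto intro!: sum.neutral)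
      qed
      show ?thesis unfolding a b by (simp add: sum.delta)
    qed
    finally show "sc_bracket l ?x (axis (idx8 k') 1) $ idx8 k' = sc_full l 8 k' k'" .
  qed
  finally show ?thesis .
qed

lemma sc_lin: "linear (sc_bracket l x)"
proof (rule linearI)
  fix y z show "sc_bracket l x (y + z) = sc_bracket l x y + sc_bracket l x z"
    unfolding sc_bracket_def by (simp add: Finite_Cartesian_Product.vec_eq_iff sum.distrib[symmetric] algebra_simps if_distrib cong: if_cong)
next
  fix r y show "sc_bracket l x (r *\<^sub>R y) = r *\<^sub>R sc_bracket l x y"
    unfolding sc_bracket_def by (simp add: Finite_Cartesian_Product.vec_eq_iff sum_distrib_left algebra_simps if_distrib cong: if_cong)
qed

lemma trace_sim:
  fixes h :: "'b::euclidean_space \<Rightarrow> 'a::euclidean_space" and hi :: "'a \<Rightarrow> 'b" and g :: "'a \<Rightarrow> 'a"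
  assumes h: "linear h" and hi: "linear hi" and g: "linear g" and hh: "\<forall>y. h (hi y) = y"
  shows "(\<Sum>b\<in>Basis. hi (g (h b)) \<bullet> b) = (\<Sum>a\<in>Basis. g a \<bullet> a)"
proof -
  have 1: "hi (g (h b)) \<bullet> b = (\<Sum>a\<in>Basis. (h b \<bullet> a) * (hi (g a) \<bullet> b))" for b
  proof -
    have "h b = (\<Sum>a\<in>Basis. (h b \<bullet> a) *\<^sub>R a)" by (simp add: euclidean_representation)
    hence "hi (g (h b)) = hi (g (\<Sum>a\<in>Basis. (h b \<bullet> a) *\<^sub>R a))" by simp
    also have "\<dots> = (\<Sum>a\<in>Basis. (h b \<bullet> a) *\<^sub>R hi (g a))"
      by (simp add: linear_sum[OF g] linear_scale[OF g] linear_sum[OF hi] linear_scale[OF hi])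
    finally show ?thesis by (simp add: inner_sum_left)
  qed
  have 2: "(\<Sum>b\<in>Basis. (hi (g a) \<bullet> b) * (h b \<bullet> a)) = g a \<bullet> a" for a
  proof -
    have "(\<Sum>b\<in>Basis. (hi (g a) \<bullet> b) * (h b \<bullet> a)) = h (\<Sum>b\<in>Basis. (hi (g a) \<bullet> b) *\<^sub>R b) \<bullet> a"
      by (simp add: linear_sum[OF h] linear_scale[OF h] inner_sum_left)
    also have "(\<Sum>b\<in>Basis. (hi (g a) \<bullet> b) *\<^sub>R b) = hi (g a)" by (simp add: euclidean_representation)
    finally show ?thesis using hh by simp
  qed
  have "(\<Sum>b\<in>Basis. hi (g (h b)) \<bullet> b) = (\<Sum>b\<in>Basis. \<Sum>a\<in>Basis. (h b \<bullet> a) * (hi (g a) \<bullet> b))"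
    using 1 by simp
  also have "\<dots> = (\<Sum>a\<in>Basis. \<Sum>b\<in>Basis. (hi (g a) \<bullet> b) * (h b \<bullet> a))"
    by (subst sum.swap) (simp add: mult.commute)
  also have "\<dots> = (\<Sum>a\<in>Basis. g a \<bullet> a)" using 2 by simp
  finally show ?thesis .
qed

lemma main_contra:
  fixes B :: "'a::euclidean_space \<Rightarrow> 'a \<Rightarrow> 'a" and L :: "real^8 \<Rightarrow> real^8 \<Rightarrow> real^8"
  assumes ss: "semisimple B" and X0: "(\<Sum>e\<in>Basis. L X0 e \<bullet> e) \<noteq> 0" and Llin: "\<And>x. linear (L x)"
  shows "\<not> is_contraction_of L B"
proof
  assume "is_contraction_of L B"
  then obtain B1 and f :: "'a \<Rightarrow> real^8" where cl: "contraction_limit B B1" and fl: "linear f" and fb: "bij f"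
    and iso: "\<And>X Y. f (B1 X Y) = L (f X) (f Y)" unfolding is_contraction_of_def by blast
  obtain Ph :: "real \<Rightarrow> 'a \<Rightarrow> 'a" where Ph: "\<And>t. t \<ge> 1 \<Longrightarrow> linear (Ph t) \<and> bij (Ph t)"
    and lim: "\<And>X Y. ((\<lambda>t. inv_into UNIV (Ph t) (B (Ph t X) (Ph t Y))) \<longlongrightarrow> B1 X Y) at_top"
    using cl unfolding contraction_limit_def by blast
  have uni: "(\<Sum>b\<in>Basis. B y b \<bullet> b) = 0" for y by (rule semisimple_unimodular[OF ss])
  have blin: "linear (B y)" for y using ss unfolding semisimple_def lie_algebra_def bilinear_def by blast
  have T1: "(\<Sum>b\<in>Basis. B1 X b \<bullet> b) = 0" for X
  proof -
    have l1: "((\<lambda>t. \<Sum>b\<in>Basis. inv_into UNIV (Ph t) (B (Ph t X) (Ph t b)) \<bullet> b) \<longlongrightarrow> (\<Sum>b\<in>Basis. B1 X b \<bullet> b)) at_top"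
      by (intro tendsto_sum tendsto_inner lim tendsto_const)
    have ev: "eventually (\<lambda>t. (\<Sum>b\<in>Basis. inv_into UNIV (Ph t) (B (Ph t X) (Ph t b)) \<bullet> b) = 0) at_top"
      using eventually_ge_at_top[of "1::real"]
    proof (rule eventually_mono)
      fix t :: real assume t: "t \<ge> 1"
      have pl: "linear (Ph t)" and pb: "bij (Ph t)" using Ph[OF t] by auto
      have il: "linear (inv_into UNIV (Ph t))" using eucl.inj_linear_imp_inv_linear[OF pl] pb bij_is_inj by blast
      have hh: "\<forall>y. Ph t (inv_into UNIV (Ph t) y) = y" using pb by (simp add: bij_is_surj surj_f_inv_f)
      show "(\<Sum>b\<in>Basis. inv_into UNIV (Ph t) (B (Ph t X) (Ph t b)) \<bullet> b) = 0"
        using trace_sim[OF pl il blin hh] uni by simp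
    qed
    have "((\<lambda>t. \<Sum>b\<in>Basis. inv_into UNIV (Ph t) (B (Ph t X) (Ph t b)) \<bullet> b) \<longlongrightarrow> 0) at_top"
      by (rule tendsto_eventually[OF ev])
    thus ?thesis using l1 tendsto_unique[OF trivial_limit_at_top_linorder] by blast
  qed
  have fi: "inj f" using fb bij_is_inj by blast
  have fs: "\<And>y. f (inv_into UNIV f y) = y" using fb by (simp add: bij_is_surj surj_f_inv_f)
  have fii: "\<And>x. inv_into UNIV f (f x) = x" using fi by simp
  have ifl: "linear (inv_into UNIV f)"
  proof (rule linearI)
    fix x y
    have "f (inv_into UNIV f x + inv_into UNIV f y) = x + y" by (simp add: linear_add[OF fl] fs)
    hence "inv_into UNIV f (x + y) = inv_into UNIV f (f (inv_into UNIV f x + inv_into UNIV f y))" by simp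
    thus "inv_into UNIV f (x + y) = inv_into UNIV f x + inv_into UNIV f y" using fii by simp
  next
    fix r x
    have "f (r *\<^sub>R inv_into UNIV f x) = r *\<^sub>R x" by (simp add: linear_scale[OF fl] fs)
    hence "inv_into UNIV f (r *\<^sub>R x) = inv_into UNIV f (f (r *\<^sub>R inv_into UNIV f x))" by simp
    thus "inv_into UNIV f (r *\<^sub>R x) = r *\<^sub>R inv_into UNIV f x" using fii by simp
  qed
  have B1e: "B1 X = inv_into UNIV f \<circ> L (f X) \<circ> f" for X
  proof
    fix Y show "B1 X Y = (inv_into UNIV f \<circ> L (f X) \<circ> f) Y" using iso[of X Y] fii[of "B1 X Y"] by simp
  qed
  have B1l: "linear (B1 X)" for X unfolding B1e by (intro linear_compose fl ifl Llin)
  have T2: "(\<Sum>e\<in>Basis. L (f X) e \<bullet> e) = 0" for X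
  proof -
    have "L (f X) e = f (B1 X (inv_into UNIV f e))" for e using iso[of X "inv_into UNIV f e"] fs by simp
    hence "(\<Sum>e\<in>Basis. L (f X) e \<bullet> e) = (\<Sum>e\<in>Basis. f (B1 X (inv_into UNIV f e)) \<bullet> e)" by simp
    also have "\<dots> = (\<Sum>a\<in>Basis. B1 X a \<bullet> a)" by (rule trace_sim[OF ifl fl B1l]) (simp add: fii)
    finally show ?thesis using T1 by simp
  qed
  have "(\<Sum>e\<in>Basis. L X0 e \<bullet> e) = 0" using T2[of "inv_into UNIV f X0"] fs by simp
  thus False using X0 by simp
qed

lemma set18: "{1..8::nat} = {1,2,3,4,5,6,7,8}" by auto

lemma trA: "(\<Sum>k\<in>{1..8}. sc_full (constsA @ l) 8 k k) = (\<Sum>k\<in>{1..8}. sc_full l 8 k k)"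
  unfolding set18 by (simp add: sc_full_def sc_def constsA_def)
lemma trB: "(\<Sum>k\<in>{1..8}. sc_full (constsB @ l) 8 k k) = (\<Sum>k\<in>{1..8}. sc_full l 8 k k)"
  unfolding set18 by (simp add: sc_full_def sc_def constsB_def)

lemma tr3: "(\<Sum>e\<in>Basis. L8_3 (axis (idx8 8) 1) e \<bullet> e) = -4"
  unfolding L8_3_def tr_sc trA unfolding set18 by (simp add: sc_full_def sc_def)
lemma tr4: "(\<Sum>e\<in>Basis. L8_4 p (axis (idx8 8) 1) e \<bullet> e) = -4 * p"
  unfolding L8_4_def tr_sc trA unfolding set18 by (simp add: sc_full_def sc_def)
lemma tr16: "(\<Sum>e\<in>Basis. L8_16 (axis (idx8 8) 1) e \<bullet> e) = -4"
  unfolding L8_16_def tr_sc trB unfolding set18 by (simp add: sc_full_def sc_def)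
lemma tr17: "(\<Sum>e\<in>Basis. L8_17 p (axis (idx8 8) 1) e \<bullet> e) = -2 - 2 * p"
  unfolding L8_17_def tr_sc trB unfolding set18 by (simp add: sc_full_def sc_def)
lemma tr18: "(\<Sum>e\<in>Basis. L8_18 p (axis (idx8 8) 1) e \<bullet> e) = -4 * p"
  unfolding L8_18_def tr_sc trB unfolding set18 by (simp add: sc_full_def sc_def)

theorem lemma1:
  fixes B :: "'a::euclidean_space \<Rightarrow> 'a \<Rightarrow> 'a"
  assumes "semisimple B"
  shows "\<not> is_contraction_of L8_3 B \<and>
         (\<forall>p. p \<noteq> 0 \<longrightarrow> \<not> is_contraction_of (L8_4 p) B) \<and>
         \<not> is_contraction_of L8_16 B \<and>
         (\<forall>p. p \<noteq> -1 \<longrightarrow> \<not> is_contraction_of (L8_17 p) B) \<and>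
         (\<forall>p. p \<noteq> 0 \<longrightarrow> \<not> is_contraction_of (L8_18 p) B)"
proof (intro conjI allI impI)
  show "\<not> is_contraction_of L8_3 B"
    by (rule main_contra[OF assms, of _ "axis (idx8 8) 1"]) (simp add: tr3, simp add: L8_3_def sc_lin)
  show "\<not> is_contraction_of L8_16 B"
    by (rule main_contra[OF assms, of _ "axis (idx8 8) 1"]) (simp add: tr16, simp add: L8_16_def sc_lin)
next
  fix p :: real assume "p \<noteq> 0"
  thus "\<not> is_contraction_of (L8_4 p) B"
    by (intro main_contra[OF assms, of _ "axis (idx8 8) 1"]) (simp add: tr4, simp add: L8_4_def sc_lin)
next
  fix p :: real assume "p \<noteq> -1"
  thus "\<not> is_contraction_of (L8_17 p) B"
    by (intro main_contra[OF assms, of _ "axis (idx8 8) 1"]) (simp add: tr17, simp add: L8_17_def sc_lin)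
next
  fix p :: real assume "p \<noteq> 0"
  thus "\<not> is_contraction_of (L8_18 p) B"
    by (intro main_contra[OF assms, of _ "axis (idx8 8) 1"]) (simp add: tr18, simp add: L8_18_def sc_lin)
qed


end
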